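(* Let $(\mathcal X,d)$ be a Polish space, $\mu$ a Borel probability measure on $\mathcal X$, and $(X_t)_{t\ge0}$ a $\mu$-symmetric, ergodic, conservative Markov process on $\mathcal X$ with Dirichlet form $(\mathcal E,\mathbb D(\mathcal E))$ on $L^2(\mu)$. Let $\Phi:\mathbb R^+\to[0,+\infty]$ be convex, increasing, left-continuous, with $\Phi(0)=0$ and $\lim_{r\to\infty}\Phi(r)/r=+\infty$, and let $\Psi(r)=\sup_{\lambda\ge0}(\lambda r-\Phi(\lambda))$. Assume that for constants $C_1,C_2\ge0$, $\|g^2\|_\Phi\le C_1\mathcal E(g,g)+C_2\mu(g^2)$ for all $g\in\mathbb D(\mathcal E)$ with $\mu(g^2)=1$, that a Poincaré inequality $\mathrm{Var}_\mu(g)\le C_P\mathcal E(g,g)$, $g\in\mathbb D(\mathcal E)$, holds, and that $d^p(\cdot,x_0)\in L^\Psi(\mu)$ for some $x_0\in\mathcal X$ and some $p\ge1$. Then there are positive constants $C_1',C_2',\kappa$ such that for all $\nu\in\mathcal M_1(\mathcal X)$, $$W_p^p(\nu,\mu)\le\sqrt{C_1'I(\nu|\mu)^2+C_2'I(\nu|\mu)},\qquad \kappa\left([1+W_1(\nu,\mu)^2]^{p/2}-1\right)\le I(\nu|\mu),$$ and, when $p\ge2$, $\kappa\left([1+W_2(\nu,\mu)^4]^{p/4}-1\right)\le I(\nu|\mu)$.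
   Context: Ergodicity means: $g\in\mathbb D(\mathcal E)$, $\mathcal E(g,g)=0$ imply $g$ constant. $N_\Phi(g)=\inf\{c>0:\int\Phi(|g|/c)d\mu\le1\}$, $L^\Psi(\mu)=\{g:N_\Psi(g)<\infty\}$, and $\|g\|_\Phi=\sup\{\int gu\,d\mu:\ N_\Psi(u)\le1\}$. $\mathcal M_1(\mathcal X)$ is the set of Borel probability measures; $W_q(\nu,\mu)=\left(\inf_\pi\iint d^q\,d\pi\right)^{1/q}$ over couplings $\pi$ of $\nu,\mu$. Fisher information: $I(\nu|\mu)=\mathcal E(\sqrt f,\sqrt f)$ if $\nu=f\mu$ with $\sqrt f\in\mathbb D(\mathcal E)$, $+\infty$ otherwise. *)

theory Defs
  imports "HOL-Probability.Probability"
begin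

definition sq_int :: "'a measure \<Rightarrow> ('a \<Rightarrow> real) \<Rightarrow> bool" where
  "sq_int \<mu> f \<longleftrightarrow> f \<in> borel_measurable \<mu> \<and> integrable \<mu> (\<lambda>x. (f x)\<^sup>2)"

definition dirichlet_form ::
  "'a measure \<Rightarrow> ('a \<Rightarrow> real) set \<Rightarrow> (('a \<Rightarrow> real) \<Rightarrow> ('a \<Rightarrow> real) \<Rightarrow> real) \<Rightarrow> bool" where
  "dirichlet_form \<mu> D E \<longleftrightarrow>
     D \<subseteq> {f. sq_int \<mu> f}
   \<and> (\<forall>f\<in>D. \<forall>g. g \<in> borel_measurable \<mu> \<and> (AE x in \<mu>. f x = g x) \<longrightarrow>
          g \<in> D \<and> (\<forall>h\<in>D. E g h = E f h \<and> E h g = E h f))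
   \<and> (\<forall>f\<in>D. \<forall>g\<in>D. \<forall>a::real. (\<lambda>x. f x + g x) \<in> D \<and> (\<lambda>x. a * f x) \<in> D)
   \<and> (\<forall>f\<in>D. \<forall>g\<in>D. \<forall>h\<in>D. \<forall>a::real.
          E (\<lambda>x. f x + g x) h = E f h + E g h \<and> E (\<lambda>x. a * f x) h = a * E f h)
   \<and> (\<forall>f\<in>D. \<forall>g\<in>D. E f g = E g f)
   \<and> (\<forall>f\<in>D. E f f \<ge> 0)
   \<and> (\<forall>f. sq_int \<mu> f \<longrightarrow> (\<forall>\<epsilon>>0. \<exists>g\<in>D. (\<integral>x. (f x - g x)\<^sup>2 \<partial>\<mu>) < \<epsilon>))
   \<and> (\<forall>F::nat \<Rightarrow> 'a \<Rightarrow> real. (\<forall>n. F n \<in> D) \<and>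
          (\<forall>\<epsilon>>0. \<exists>N. \<forall>n\<ge>N. \<forall>m\<ge>N.
              (\<integral>x. (F n x - F m x)\<^sup>2 \<partial>\<mu>)
              + E (\<lambda>x. F n x - F m x) (\<lambda>x. F n x - F m x) < \<epsilon>)
        \<longrightarrow> (\<exists>f\<in>D. (\<lambda>n. (\<integral>x. (F n x - f x)\<^sup>2 \<partial>\<mu>)
              + E (\<lambda>x. F n x - f x) (\<lambda>x. F n x - f x)) \<longlonglongrightarrow> 0))
   \<and> (\<forall>f\<in>D. (\<lambda>x. min 1 (max 0 (f x))) \<in> D \<and>
          E (\<lambda>x. min 1 (max 0 (f x))) (\<lambda>x. min 1 (max 0 (f x))) \<le> E f f)"

definition ergodic_form ::
  "'a measure \<Rightarrow> ('a \<Rightarrow> real) set \<Rightarrow> (('a \<Rightarrow> real) \<Rightarrow> ('a \<Rightarrow> real) \<Rightarrow> real) \<Rightarrow> bool" where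
  "ergodic_form \<mu> D E \<longleftrightarrow> (\<forall>g\<in>D. E g g = 0 \<longrightarrow> (\<exists>c. AE x in \<mu>. g x = c))"

text \<open>Conservativeness (P_t 1 = 1) for a Dirichlet form w.r.t. a finite measure.\<close>
definition conservative_form ::
  "'a measure \<Rightarrow> ('a \<Rightarrow> real) set \<Rightarrow> (('a \<Rightarrow> real) \<Rightarrow> ('a \<Rightarrow> real) \<Rightarrow> real) \<Rightarrow> bool" where
  "conservative_form \<mu> D E \<longleftrightarrow> (\<lambda>x. 1) \<in> D \<and> E (\<lambda>x. 1) (\<lambda>x. 1) = 0"

definition young_fun :: "(real \<Rightarrow> ennreal) \<Rightarrow> bool" where
  "young_fun \<Phi> \<longleftrightarrow>
     \<Phi> 0 = 0
   \<and> mono_on {0..} \<Phi>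
   \<and> (\<forall>x\<ge>0. \<forall>y\<ge>0. \<forall>t\<in>{0..1}.
         \<Phi> ((1 - t) * x + t * y) \<le> ennreal (1 - t) * \<Phi> x + ennreal t * \<Phi> y)
   \<and> (\<forall>r>0. (\<Phi> \<longlongrightarrow> \<Phi> r) (at_left r))
   \<and> ((\<lambda>r. \<Phi> r / ennreal r) \<longlongrightarrow> \<infinity>) at_top"

definition young_conj :: "(real \<Rightarrow> ennreal) \<Rightarrow> real \<Rightarrow> ennreal" where
  "young_conj \<Phi> r = e2ennreal (SUP l\<in>{0..}. ereal (l * r) - enn2ereal (\<Phi> l))"

text \<open>Luxemburg gauge N_Phi (value +infinity if no c works).\<close>
definition orlicz_gauge :: "'a measure \<Rightarrow> (real \<Rightarrow> ennreal) \<Rightarrow> ('a \<Rightarrow> real) \<Rightarrow> ereal" where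
  "orlicz_gauge \<mu> \<Phi> g =
     Inf {ereal c | c. c > 0 \<and> (\<integral>\<^sup>+ x. \<Phi> (\<bar>g x\<bar> / c) \<partial>\<mu>) \<le> 1}"

definition orlicz_space :: "'a measure \<Rightarrow> (real \<Rightarrow> ennreal) \<Rightarrow> ('a \<Rightarrow> real) set" where
  "orlicz_space \<mu> \<Phi> = {g. g \<in> borel_measurable \<mu> \<and> orlicz_gauge \<mu> \<Phi> g < \<infinity>}"

definition orlicz_norm :: "'a measure \<Rightarrow> (real \<Rightarrow> ennreal) \<Rightarrow> ('a \<Rightarrow> real) \<Rightarrow> ereal" where
  "orlicz_norm \<mu> \<Phi> g =
     (SUP u \<in> {u. u \<in> borel_measurable \<mu> \<and> orlicz_gauge \<mu> (young_conj \<Phi>) u \<le> 1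
                  \<and> integrable \<mu> (\<lambda>x. g x * u x)}. ereal (\<integral>x. g x * u x \<partial>\<mu>))"

definition prob_measures :: "'a::topological_space measure set" where
  "prob_measures = {\<nu>. prob_space \<nu> \<and> sets \<nu> = sets borel}"

definition couplings :: "'a::topological_space measure \<Rightarrow> 'a measure \<Rightarrow> ('a \<times> 'a) measure set" where
  "couplings \<nu> \<mu> = {\<pi>. sets \<pi> = sets (borel :: ('a \<times> 'a) measure)
                      \<and> distr \<pi> borel fst = \<nu> \<and> distr \<pi> borel snd = \<mu>}"

definition wasserstein_pow :: "real \<Rightarrow> 'a::metric_space measure \<Rightarrow> 'a measure \<Rightarrow> ennreal" where
  "wasserstein_pow q \<nu> \<mu> =
     (INF \<pi> \<in> couplings \<nu> \<mu>. \<integral>\<^sup>+ z. ennreal (dist (fst z) (snd z) powr q) \<partial>\<pi>)"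

definition fisher_info ::
  "('a \<Rightarrow> real) set \<Rightarrow> (('a \<Rightarrow> real) \<Rightarrow> ('a \<Rightarrow> real) \<Rightarrow> real) \<Rightarrow> 'a measure \<Rightarrow> 'a measure \<Rightarrow> ennreal" where
  "fisher_info D E \<mu> \<nu> =
     (if \<exists>f. f \<in> borel_measurable \<mu> \<and> (\<forall>x. f x \<ge> 0) \<and> \<nu> = density \<mu> (\<lambda>x. ennreal (f x))
             \<and> (\<lambda>x. sqrt (f x)) \<in> D
      then (let f = (SOME f. f \<in> borel_measurable \<mu> \<and> (\<forall>x. f x \<ge> 0)
                         \<and> \<nu> = density \<mu> (\<lambda>x. ennreal (f x)) \<and> (\<lambda>x. sqrt (f x)) \<in> D)
            in ennreal (E (\<lambda>x. sqrt (f x)) (\<lambda>x. sqrt (f x))))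
      else \<infinity>)"

end

theory Submission
  imports Defs
begin

lemma mix_measure:
  fixes M1 M2 N :: "'b measure"
  assumes s1: "sets M1 = sets N" and s2: "sets M2 = sets N"
    and e1: "emeasure M1 (space M1) \<le> 1" and e2: "emeasure M2 (space M2) \<le> 1"
    and ne: "space N \<noteq> {}"
  shows "sets (count_space UNIV \<bind> (\<lambda>b::bool. if b then M1 else M2)) = sets N"
    and "\<And>g. g \<in> borel_measurable N \<Longrightarrow>
       (\<integral>\<^sup>+z. g z \<partial>(count_space UNIV \<bind> (\<lambda>b::bool. if b then M1 else M2)))
        = (\<integral>\<^sup>+z. g z \<partial>M1) + (\<integral>\<^sup>+z. g z \<partial>M2)"
proof -
  have sp1: "space M1 = space N" using s1 by (rule sets_eq_imp_space_eq)
  have sp2: "space M2 = space N" using s2 by (rule sets_eq_imp_space_eq)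
  have sub1: "subprob_space M1" using e1 ne sp1 by (intro subprob_spaceI) auto
  have sub2: "subprob_space M2" using e2 ne sp2 by (intro subprob_spaceI) auto
  have K: "(\<lambda>b::bool. if b then M1 else M2) \<in> measurable (count_space UNIV) (subprob_algebra N)"
    unfolding measurable_count_space_eq1 space_subprob_algebra
    using sub1 sub2 s1 s2 by auto
  show "sets (count_space UNIV \<bind> (\<lambda>b::bool. if b then M1 else M2)) = sets N"
    by (rule sets_bind) (use s1 s2 in auto)
  fix g :: "'b \<Rightarrow> ennreal" assume g: "g \<in> borel_measurable N"
  have "(\<integral>\<^sup>+z. g z \<partial>(count_space UNIV \<bind> (\<lambda>b::bool. if b then M1 else M2)))
      = (\<integral>\<^sup>+b. (\<integral>\<^sup>+z. g z \<partial>(if b then M1 else M2)) \<partial>count_space UNIV)"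
    by (rule nn_integral_bind[OF g K])
  also have "\<dots> = (\<Sum>b\<in>UNIV. (\<integral>\<^sup>+z. g z \<partial>(if b then M1 else M2)))"
    by (rule nn_integral_count_space_finite) simp
  also have "\<dots> = (\<integral>\<^sup>+z. g z \<partial>M1) + (\<integral>\<^sup>+z. g z \<partial>M2)"
    by (simp add: UNIV_bool add.commute)
  finally show "(\<integral>\<^sup>+z. g z \<partial>(count_space UNIV \<bind> (\<lambda>b::bool. if b then M1 else M2)))
        = (\<integral>\<^sup>+z. g z \<partial>M1) + (\<integral>\<^sup>+z. g z \<partial>M2)" .
qed

lemma sets_pair_borel:
  fixes \<mu> :: "'a::polish_space measure"
  assumes "sets \<mu> = sets borel"
  shows "sets (\<mu> \<Otimes>\<^sub>M \<mu>) = sets (borel :: ('a \<times> 'a) measure)"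
  by (metis assms borel_prod sets_pair_measure_cong)

lemma borel_fst[measurable]:
  "fst \<in> measurable (borel :: ('a::second_countable_topology \<times> 'b::second_countable_topology) measure) borel"
  by (metis borel_prod measurable_fst)
lemma borel_snd[measurable]:
  "snd \<in> measurable (borel :: ('a::second_countable_topology \<times> 'b::second_countable_topology) measure) borel"
  by (metis borel_prod measurable_snd)

lemma ennreal_plus_eq: "(a::real) \<ge> 0 \<Longrightarrow> b \<ge> 0 \<Longrightarrow> a + b = c \<Longrightarrow> ennreal a + ennreal b = ennreal c"
  by (metis ennreal_plus)

lemma coupling_construct:
  fixes \<mu> :: "'a::polish_space measure" and f :: "'a \<Rightarrow> real"
  assumes mu: "prob_space \<mu>" "sets \<mu> = sets borel"
    and fm: "f \<in> borel_measurable \<mu>" and fpos: "\<And>x. f x \<ge> 0"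
    and f1: "(\<integral>\<^sup>+x. ennreal (f x) \<partial>\<mu>) = 1"
  shows "\<exists>\<pi>. \<pi> \<in> couplings (density \<mu> (\<lambda>x. ennreal (f x))) \<mu> \<and> prob_space \<pi> \<and>
    (\<forall>c W. c \<in> borel_measurable borel \<longrightarrow> W \<in> borel_measurable borel \<longrightarrow>
        (\<forall>x. c (x, x) = 0) \<longrightarrow> (\<forall>x y. c (x, y) \<le> W x + W y) \<longrightarrow>
        (\<integral>\<^sup>+z. c z \<partial>\<pi>) \<le> (\<integral>\<^sup>+x. W x * ennreal \<bar>f x - 1\<bar> \<partial>\<mu>))"
proof -
  interpret prob_space \<mu> by (fact mu(1))
  interpret PS: pair_sigma_finite \<mu> \<mu>
    by (simp add: pair_sigma_finite_def prob_space_imp_sigma_finite mu(1))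
  have spmu: "space \<mu> = UNIV" using mu(2) sets_eq_imp_space_eq by fastforce
  have fb[measurable]: "f \<in> borel_measurable borel" using fm mu(2) measurable_cong_sets by blast
  define a where "a x = min (f x) 1" for x
  define P where "P x = max (f x - 1) 0" for x
  define N where "N x = max (1 - f x) 0" for x
  have [measurable]: "a \<in> borel_measurable borel" "P \<in> borel_measurable borel" "N \<in> borel_measurable borel"
    unfolding a_def[abs_def] P_def[abs_def] N_def[abs_def] by measurable
  define m where "m = (\<integral>\<^sup>+x. ennreal (P x) \<partial>\<mu>)"
  define h where "h z = ennreal (P (fst z)) * ennreal (N (snd z)) / m" for z
  have hb[measurable]: "h \<in> borel_measurable borel" unfolding h_def[abs_def] by measurable
  define T where "T = (\<lambda>x::'a. (x, x))"
  have Tb[measurable]: "T \<in> measurable borel borel"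
    unfolding T_def by (intro borel_measurable_continuous_onI continuous_intros)
  define \<pi>1 where "\<pi>1 = distr (density \<mu> (\<lambda>x. ennreal (a x))) (borel :: ('a\<times>'a) measure) T"
  define \<pi>2 where "\<pi>2 = density (\<mu> \<Otimes>\<^sub>M \<mu>) h"
  have spp: "sets (\<mu> \<Otimes>\<^sub>M \<mu>) = sets (borel :: ('a \<times> 'a) measure)"
    by (rule sets_pair_borel[OF mu(2)])
  have meas_pair: "g \<in> borel_measurable (\<mu> \<Otimes>\<^sub>M \<mu>)" if "g \<in> borel_measurable borel" for g :: "'a\<times>'a \<Rightarrow> ennreal"
    using that spp measurable_cong_sets by blast
  have meas_mu: "g \<in> borel_measurable \<mu>" if "g \<in> borel_measurable borel" for g :: "'a \<Rightarrow> ennreal"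
    using that mu(2) measurable_cong_sets by blast
  have Tm: "T \<in> measurable (density \<mu> (\<lambda>x. ennreal (a x))) borel"
    using Tb mu(2) measurable_cong_sets by (metis sets_density)
  have int1: "(\<integral>\<^sup>+z. g z \<partial>\<pi>1) = (\<integral>\<^sup>+x. ennreal (a x) * g (x, x) \<partial>\<mu>)"
    if g: "g \<in> borel_measurable borel" for g
  proof -
    have "(\<integral>\<^sup>+z. g z \<partial>\<pi>1) = (\<integral>\<^sup>+x. g (T x) \<partial>density \<mu> (\<lambda>x. ennreal (a x)))"
      unfolding \<pi>1_def by (rule nn_integral_distr[OF Tm]) (use g in simp)
    also have "\<dots> = (\<integral>\<^sup>+x. ennreal (a x) * g (T x) \<partial>\<mu>)"
      by (rule nn_integral_density) (use g in \<open>auto intro!: meas_mu simp: T_def\<close>)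
    finally show ?thesis by (simp add: T_def)
  qed
  have int2: "(\<integral>\<^sup>+z. g z \<partial>\<pi>2) = (\<integral>\<^sup>+x. \<integral>\<^sup>+y. h (x, y) * g (x, y) \<partial>\<mu> \<partial>\<mu>)"
    if g: "g \<in> borel_measurable borel" for g
  proof -
    have "(\<integral>\<^sup>+z. g z \<partial>\<pi>2) = (\<integral>\<^sup>+z. h z * g z \<partial>(\<mu> \<Otimes>\<^sub>M \<mu>))"
      unfolding \<pi>2_def by (rule nn_integral_density) (use g in \<open>auto intro!: meas_pair\<close>)
    also have "\<dots> = (\<integral>\<^sup>+x. \<integral>\<^sup>+y. h (x, y) * g (x, y) \<partial>\<mu> \<partial>\<mu>)"
    proof -
      have m: "(\<lambda>z. h z * g z) \<in> borel_measurable (\<mu> \<Otimes>\<^sub>M \<mu>)"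
        by (intro meas_pair) (use g in measurable)
      show ?thesis using nn_integral_fst[OF m] by simp
    qed
    finally show ?thesis .
  qed
  have Nm: "(\<lambda>y. ennreal (N y)) \<in> borel_measurable \<mu>" by (intro meas_mu) measurable
  have Pm: "(\<lambda>y. ennreal (P y)) \<in> borel_measurable \<mu>" by (intro meas_mu) measurable
  have aP: "ennreal (a x) + ennreal (P x) = ennreal (f x)" for x
    unfolding a_def P_def using fpos[of x] by (intro ennreal_plus_eq) (auto simp: min_def max_def)
  have aN: "ennreal (a x) + ennreal (N x) = 1" for x
    unfolding a_def N_def using fpos[of x] by (simp only: ennreal_1[symmetric], intro ennreal_plus_eq) (auto simp: min_def max_def)
  have PN: "ennreal (P x) + ennreal (N x) = ennreal \<bar>f x - 1\<bar>" for x
    unfolding N_def P_def by (intro ennreal_plus_eq) (auto simp: max_def)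
  have mua: "(\<integral>\<^sup>+x. ennreal (a x) \<partial>\<mu>) \<le> 1"
  proof -
    have "(\<integral>\<^sup>+x. ennreal (a x) \<partial>\<mu>) \<le> (\<integral>\<^sup>+x. 1 \<partial>\<mu>)"
      by (intro nn_integral_mono) (auto simp: a_def)
    also have "\<dots> = 1" by (simp add: emeasure_space_1)
    finally show ?thesis .
  qed
  have sumP: "(\<integral>\<^sup>+x. ennreal (a x) \<partial>\<mu>) + m = 1"
    unfolding m_def using f1
    by (subst nn_integral_add[symmetric]) (auto intro!: meas_mu simp: aP)
  have sumN: "(\<integral>\<^sup>+x. ennreal (a x) \<partial>\<mu>) + (\<integral>\<^sup>+x. ennreal (N x) \<partial>\<mu>) = 1"
    by (subst nn_integral_add[symmetric]) (auto intro!: meas_mu simp: aN emeasure_space_1)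
  have Atop: "(\<integral>\<^sup>+x. ennreal (a x) \<partial>\<mu>) \<noteq> \<top>"
    using mua neq_top_trans ennreal_one_neq_top by blast
  have intN: "(\<integral>\<^sup>+x. ennreal (N x) \<partial>\<mu>) = m"
  proof -
    have "(\<integral>\<^sup>+x. ennreal (a x) \<partial>\<mu>) + (\<integral>\<^sup>+x. ennreal (N x) \<partial>\<mu>) = (\<integral>\<^sup>+x. ennreal (a x) \<partial>\<mu>) + m"
      using sumP sumN by simp
    then show ?thesis using Atop by (auto simp: ennreal_add_left_cancel)
  qed
  have m1: "m \<le> 1"
  proof -
    have "m \<le> (\<integral>\<^sup>+x. ennreal (a x) \<partial>\<mu>) + m" by (simp add: add_increasing)
    then show ?thesis using sumP by simp
  qed
  have mtop: "m \<noteq> \<top>" using m1 neq_top_trans ennreal_one_neq_top by blast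
  have inner: "(\<integral>\<^sup>+x. \<integral>\<^sup>+y. h (x, y) * g (x, y) \<partial>\<mu> \<partial>\<mu>)
      = (\<integral>\<^sup>+x. ennreal (P x) * (\<integral>\<^sup>+y. ennreal (N y) * g (x, y) \<partial>\<mu>) / m \<partial>\<mu>)"
    if g: "g \<in> borel_measurable borel" for g
  proof (rule nn_integral_cong)
    fix x
    have gm: "(\<lambda>y. ennreal (N y) * g (x, y)) \<in> borel_measurable \<mu>"
      by (intro meas_mu) (use g in measurable)
    have "(\<integral>\<^sup>+y. h (x, y) * g (x, y) \<partial>\<mu>) = (\<integral>\<^sup>+y. (ennreal (P x) / m) * (ennreal (N y) * g (x, y)) \<partial>\<mu>)"
      by (intro nn_integral_cong) (simp add: h_def ennreal_times_divide divide_ennreal_def mult_ac)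
    also have "\<dots> = (ennreal (P x) / m) * (\<integral>\<^sup>+y. ennreal (N y) * g (x, y) \<partial>\<mu>)"
      by (rule nn_integral_cmult[OF gm])
    finally show "(\<integral>\<^sup>+y. h (x, y) * g (x, y) \<partial>\<mu>) = ennreal (P x) * (\<integral>\<^sup>+y. ennreal (N y) * g (x, y) \<partial>\<mu>) / m"
      by (simp add: divide_ennreal_def mult_ac)
  qed
  have Pzero: "m = 0 \<Longrightarrow> AE x in \<mu>. ennreal (P x) = 0"
    unfolding m_def by (subst nn_integral_0_iff_AE[symmetric]) (auto intro!: meas_mu)
  have Nzero: "m = 0 \<Longrightarrow> AE x in \<mu>. ennreal (N x) = 0"
    using intN by (subst nn_integral_0_iff_AE[symmetric]) (auto intro!: meas_mu)
  have F: "(\<integral>\<^sup>+x. \<integral>\<^sup>+y. h (x, y) * G x \<partial>\<mu> \<partial>\<mu>) = (\<integral>\<^sup>+x. ennreal (P x) * G x \<partial>\<mu>)"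
    if G: "G \<in> borel_measurable borel" for G
  proof -
    have "(\<integral>\<^sup>+x. \<integral>\<^sup>+y. h (x, y) * G x \<partial>\<mu> \<partial>\<mu>)
        = (\<integral>\<^sup>+x. ennreal (P x) * (\<integral>\<^sup>+y. ennreal (N y) * G x \<partial>\<mu>) / m \<partial>\<mu>)"
      using inner[of "\<lambda>z. G (fst z)"] G by simp
    also have "\<dots> = (\<integral>\<^sup>+x. ennreal (P x) * G x * (m / m) \<partial>\<mu>)"
    proof (rule nn_integral_cong)
      fix x
      have "(\<integral>\<^sup>+y. ennreal (N y) * G x \<partial>\<mu>) = m * G x"
        using nn_integral_multc[OF Nm, of "G x"] intN by simp
      then show "ennreal (P x) * (\<integral>\<^sup>+y. ennreal (N y) * G x \<partial>\<mu>) / m = ennreal (P x) * G x * (m / m)"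
        by (simp add: divide_ennreal_def mult_ac)
    qed
    also have "\<dots> = (\<integral>\<^sup>+x. ennreal (P x) * G x \<partial>\<mu>)"
    proof (cases "m = 0")
      case True
      have "(\<integral>\<^sup>+x. ennreal (P x) * G x * (m / m) \<partial>\<mu>) = 0"
        using True by simp
      moreover have "(\<integral>\<^sup>+x. ennreal (P x) * G x \<partial>\<mu>) = 0"
      proof -
        have mm: "(\<lambda>x. ennreal (P x) * G x) \<in> borel_measurable \<mu>" by (intro meas_mu) (use G in measurable)
        show ?thesis using Pzero[OF True] by (subst nn_integral_0_iff_AE[OF mm]) (auto elim!: eventually_mono)
      qed
      ultimately show ?thesis by simp
    next
      case False
      then show ?thesis using mtop by (simp add: ennreal_divide_self top.not_eq_extremum)
    qed
    finally show ?thesis .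
  qed
  have S: "(\<integral>\<^sup>+x. \<integral>\<^sup>+y. h (x, y) * G y \<partial>\<mu> \<partial>\<mu>) = (\<integral>\<^sup>+x. ennreal (N x) * G x \<partial>\<mu>)"
    if G: "G \<in> borel_measurable borel" for G
  proof -
    let ?c = "(\<integral>\<^sup>+y. ennreal (N y) * G y \<partial>\<mu>)"
    have "(\<integral>\<^sup>+x. \<integral>\<^sup>+y. h (x, y) * G y \<partial>\<mu> \<partial>\<mu>)
        = (\<integral>\<^sup>+x. ennreal (P x) * ?c / m \<partial>\<mu>)"
      using inner[of "\<lambda>z. G (snd z)"] G by simp
    also have "\<dots> = (\<integral>\<^sup>+x. ennreal (P x) * (?c / m) \<partial>\<mu>)"
      by (simp add: divide_ennreal_def mult.assoc)
    also have "\<dots> = m * (?c / m)"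
      unfolding m_def by (rule nn_integral_multc[OF Pm])
    also have "\<dots> = m * ?c / m"
      by (simp add: divide_ennreal_def mult.assoc)
    also have "\<dots> = ?c"
    proof (cases "m = 0")
      case True
      have "?c = 0"
      proof -
        have mm: "(\<lambda>x. ennreal (N x) * G x) \<in> borel_measurable \<mu>" by (intro meas_mu) (use G in measurable)
        show ?thesis using Nzero[OF True] by (subst nn_integral_0_iff_AE[OF mm]) (auto elim!: eventually_mono)
      qed
      then show ?thesis using True by simp
    next
      case False
      show ?thesis by (subst mult.commute) (rule ennreal_mult_divide_eq[OF False mtop])
    qed
    finally show ?thesis .
  qed
  have sp1: "sets \<pi>1 = sets (borel :: ('a\<times>'a) measure)" unfolding \<pi>1_def by simp
  have sp2: "sets \<pi>2 = sets (borel :: ('a\<times>'a) measure)" unfolding \<pi>2_def using spp by simp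
  have one_b: "(\<lambda>_. 1::ennreal) \<in> borel_measurable borel" by simp
  have e1: "emeasure \<pi>1 (space \<pi>1) \<le> 1"
  proof -
    have "emeasure \<pi>1 (space \<pi>1) = (\<integral>\<^sup>+z. 1 \<partial>\<pi>1)" by simp
    also have "\<dots> = (\<integral>\<^sup>+x. ennreal (a x) \<partial>\<mu>)" using int1[OF one_b] by simp
    finally show ?thesis using mua by simp
  qed
  have e2: "emeasure \<pi>2 (space \<pi>2) \<le> 1"
  proof -
    have "emeasure \<pi>2 (space \<pi>2) = (\<integral>\<^sup>+z. 1 \<partial>\<pi>2)" by simp
    also have "\<dots> = (\<integral>\<^sup>+x. \<integral>\<^sup>+y. h (x, y) * 1 \<partial>\<mu> \<partial>\<mu>)" using int2[OF one_b] by simp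
    also have "\<dots> = m" using F[OF one_b] by (simp add: m_def)
    finally show ?thesis using m1 by simp
  qed
  define \<pi> where "\<pi> = count_space UNIV \<bind> (\<lambda>b::bool. if b then \<pi>1 else \<pi>2)"
  have spi: "sets \<pi> = sets (borel :: ('a\<times>'a) measure)"
    unfolding \<pi>_def by (rule mix_measure(1)[OF sp1 sp2 e1 e2]) simp
  have Ipi: "(\<integral>\<^sup>+z. g z \<partial>\<pi>) = (\<integral>\<^sup>+z. g z \<partial>\<pi>1) + (\<integral>\<^sup>+z. g z \<partial>\<pi>2)"
    if g: "g \<in> borel_measurable borel" for g
    unfolding \<pi>_def by (rule mix_measure(2)[OF sp1 sp2 e1 e2 _ g]) simp
  have spacepi: "space \<pi> = UNIV" using spi sets_eq_imp_space_eq by fastforce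
  have margfst: "(\<integral>\<^sup>+z. G (fst z) \<partial>\<pi>) = (\<integral>\<^sup>+x. ennreal (f x) * G x \<partial>\<mu>)"
    if G: "G \<in> borel_measurable borel" for G
  proof -
    have Gf: "(\<lambda>z::'a\<times>'a. G (fst z)) \<in> borel_measurable borel" using measurable_compose[OF borel_fst G] .
    have "(\<integral>\<^sup>+z. G (fst z) \<partial>\<pi>) = (\<integral>\<^sup>+x. ennreal (a x) * G x \<partial>\<mu>) + (\<integral>\<^sup>+x. ennreal (P x) * G x \<partial>\<mu>)"
      using Ipi[OF Gf] int1[OF Gf] int2[OF Gf] F[OF G] by simp
    also have "\<dots> = (\<integral>\<^sup>+x. ennreal (a x) * G x + ennreal (P x) * G x \<partial>\<mu>)"
      by (rule nn_integral_add[symmetric]) (use G in \<open>auto intro!: meas_mu\<close>)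
    also have "\<dots> = (\<integral>\<^sup>+x. ennreal (f x) * G x \<partial>\<mu>)"
      by (intro nn_integral_cong) (simp add: aP[symmetric] distrib_right)
    finally show ?thesis .
  qed
  have margsnd: "(\<integral>\<^sup>+z. G (snd z) \<partial>\<pi>) = (\<integral>\<^sup>+x. G x \<partial>\<mu>)"
    if G: "G \<in> borel_measurable borel" for G
  proof -
    have Gf: "(\<lambda>z::'a\<times>'a. G (snd z)) \<in> borel_measurable borel" using measurable_compose[OF borel_snd G] .
    have "(\<integral>\<^sup>+z. G (snd z) \<partial>\<pi>) = (\<integral>\<^sup>+x. ennreal (a x) * G x \<partial>\<mu>) + (\<integral>\<^sup>+x. ennreal (N x) * G x \<partial>\<mu>)"
      using Ipi[OF Gf] int1[OF Gf] int2[OF Gf] S[OF G] by simp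
    also have "\<dots> = (\<integral>\<^sup>+x. ennreal (a x) * G x + ennreal (N x) * G x \<partial>\<mu>)"
      by (rule nn_integral_add[symmetric]) (use G in \<open>auto intro!: meas_mu\<close>)
    also have "\<dots> = (\<integral>\<^sup>+x. G x \<partial>\<mu>)"
      by (intro nn_integral_cong) (simp add: distrib_right[symmetric] aN)
    finally show ?thesis .
  qed
  have fstm: "fst \<in> measurable \<pi> borel" using borel_fst spi measurable_cong_sets by blast
  have sndm: "snd \<in> measurable \<pi> borel" using borel_snd spi measurable_cong_sets by blast
  have d1: "distr \<pi> borel fst = density \<mu> (\<lambda>x. ennreal (f x))"
  proof (rule measure_eqI)
    show "sets (distr \<pi> borel fst) = sets (density \<mu> (\<lambda>x. ennreal (f x)))" using mu(2) by simp
    fix A assume "A \<in> sets (distr \<pi> borel fst)"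
    then have A: "A \<in> sets borel" by simp
    have ib: "indicator A \<in> borel_measurable borel" using A by simp
    have "emeasure (distr \<pi> borel fst) A = (\<integral>\<^sup>+z. indicator A z \<partial>distr \<pi> borel fst)"
      using A by simp
    also have "\<dots> = (\<integral>\<^sup>+z. indicator A (fst z) \<partial>\<pi>)"
      by (rule nn_integral_distr[OF fstm]) (use A in simp)
    also have "\<dots> = (\<integral>\<^sup>+x. ennreal (f x) * indicator A x \<partial>\<mu>)"
      by (rule margfst[OF ib])
    also have "\<dots> = emeasure (density \<mu> (\<lambda>x. ennreal (f x))) A"
      using A mu(2) by (simp add: emeasure_density)
    finally show "emeasure (distr \<pi> borel fst) A = emeasure (density \<mu> (\<lambda>x. ennreal (f x))) A" .
  qed
  have d2: "distr \<pi> borel snd = \<mu>"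
  proof (rule measure_eqI)
    show "sets (distr \<pi> borel snd) = sets \<mu>" using mu(2) by simp
    fix A assume "A \<in> sets (distr \<pi> borel snd)"
    then have A: "A \<in> sets borel" by simp
    have ib: "indicator A \<in> borel_measurable borel" using A by simp
    have "emeasure (distr \<pi> borel snd) A = (\<integral>\<^sup>+z. indicator A z \<partial>distr \<pi> borel snd)"
      using A by simp
    also have "\<dots> = (\<integral>\<^sup>+z. indicator A (snd z) \<partial>\<pi>)"
      by (rule nn_integral_distr[OF sndm]) (use A in simp)
    also have "\<dots> = (\<integral>\<^sup>+x. indicator A x \<partial>\<mu>)"
      by (rule margsnd[OF ib])
    also have "\<dots> = emeasure \<mu> A"
      using A mu(2) by simp
    finally show "emeasure (distr \<pi> borel snd) A = emeasure \<mu> A" .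
  qed
  have cpl: "\<pi> \<in> couplings (density \<mu> (\<lambda>x. ennreal (f x))) \<mu>"
    unfolding couplings_def using spi d1 d2 by simp
  have pspi: "prob_space \<pi>"
  proof
    have "emeasure \<pi> (space \<pi>) = (\<integral>\<^sup>+z. (\<lambda>_. 1) (fst z) \<partial>\<pi>)" by simp
    also have "\<dots> = 1" using margfst[OF one_b] f1 by simp
    finally show "emeasure \<pi> (space \<pi>) = 1" .
  qed
  have cost: "(\<integral>\<^sup>+z. c z \<partial>\<pi>) \<le> (\<integral>\<^sup>+x. W x * ennreal \<bar>f x - 1\<bar> \<partial>\<mu>)"
    if cb: "c \<in> borel_measurable borel" and Wb: "W \<in> borel_measurable borel"
      and c0: "\<forall>x. c (x, x) = 0" and cW: "\<forall>x y. c (x, y) \<le> W x + W y" for c W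
  proof -
    have W1: "(\<lambda>z::'a\<times>'a. W (fst z)) \<in> borel_measurable borel" "(\<lambda>z::'a\<times>'a. W (snd z)) \<in> borel_measurable borel"
      using measurable_compose[OF borel_fst Wb] measurable_compose[OF borel_snd Wb] by auto
    have "(\<integral>\<^sup>+z. c z \<partial>\<pi>) = (\<integral>\<^sup>+z. c z \<partial>\<pi>2)"
      using Ipi[OF cb] int1[OF cb] c0 by simp
    also have "\<dots> \<le> (\<integral>\<^sup>+z. W (fst z) + W (snd z) \<partial>\<pi>2)"
      by (intro nn_integral_mono) (use cW in \<open>auto simp: split_paired_all\<close>)
    also have "\<dots> = (\<integral>\<^sup>+z. W (fst z) \<partial>\<pi>2) + (\<integral>\<^sup>+z. W (snd z) \<partial>\<pi>2)"
      by (rule nn_integral_add) (use W1 sp2 measurable_cong_sets in blast)+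
    also have "\<dots> = (\<integral>\<^sup>+x. ennreal (P x) * W x \<partial>\<mu>) + (\<integral>\<^sup>+x. ennreal (N x) * W x \<partial>\<mu>)"
      using int2[OF W1(1)] int2[OF W1(2)] F[OF Wb] S[OF Wb] by simp
    also have "\<dots> = (\<integral>\<^sup>+x. ennreal (P x) * W x + ennreal (N x) * W x \<partial>\<mu>)"
      by (rule nn_integral_add[symmetric]) (use Wb in \<open>auto intro!: meas_mu\<close>)
    also have "\<dots> = (\<integral>\<^sup>+x. W x * ennreal \<bar>f x - 1\<bar> \<partial>\<mu>)"
      by (intro nn_integral_cong) (simp add: PN[symmetric] distrib_left mult.commute)
    finally show ?thesis .
  qed
  show ?thesis
  proof (rule exI[of _ \<pi>], intro conjI cpl pspi allI impI)
    fix c :: "'a \<times> 'a \<Rightarrow> ennreal"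
    fix W :: "'a \<Rightarrow> ennreal"
    assume "c \<in> borel_measurable borel" "W \<in> borel_measurable borel"
      "\<forall>x. c (x, x) = 0" "\<forall>x y. c (x, y) \<le> W x + W y"
    then show "(\<integral>\<^sup>+z. c z \<partial>\<pi>) \<le> (\<integral>\<^sup>+x. W x * ennreal \<bar>f x - 1\<bar> \<partial>\<mu>)" by (rule cost)
  qed
qed

lemma young_conj_mono:
  assumes "0 \<le> r" "r \<le> r'"
  shows "young_conj \<Phi> r \<le> young_conj \<Phi> r'"
  unfolding young_conj_def
proof (rule e2ennreal_mono, rule SUP_mono)
  fix l :: real assume "l \<in> {0..}"
  then have "l * r \<le> l * r'" using assms by (auto intro: mult_left_mono)
  then have "ereal (l * r) - enn2ereal (\<Phi> l) \<le> ereal (l * r') - enn2ereal (\<Phi> l)"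
    by (intro ereal_minus_mono) auto
  then show "\<exists>m\<in>{0..}. ereal (l * r) - enn2ereal (\<Phi> l) \<le> ereal (m * r') - enn2ereal (\<Phi> m)"
    using \<open>l \<in> {0..}\<close> by blast
qed

lemma gauge_le1:
  assumes "(\<integral>\<^sup>+ x. \<Psi> \<bar>u x\<bar> \<partial>\<mu>) \<le> 1"
  shows "orlicz_gauge \<mu> \<Psi> u \<le> 1"
  unfolding orlicz_gauge_def
  by (rule Inf_lower2[where u="ereal 1"]) (use assms in auto)

lemma gauge_fin:
  assumes "orlicz_gauge \<mu> \<Psi> u < \<infinity>"
  shows "\<exists>c>0. (\<integral>\<^sup>+ x. \<Psi> (\<bar>u x\<bar> / c) \<partial>\<mu>) \<le> 1"
proof (rule ccontr)
  assume "\<not> ?thesis"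
  then have e: "{ereal c | c. c > 0 \<and> (\<integral>\<^sup>+ x. \<Psi> (\<bar>u x\<bar> / c) \<partial>\<mu>) \<le> 1} = {}" by auto
  have "orlicz_gauge \<mu> \<Psi> u = top" unfolding orlicz_gauge_def e by simp
  then show False using assms by (simp add: top_ereal_def)
qed

context
  fixes \<mu> :: "'a measure" and D E
  assumes DF: "dirichlet_form \<mu> D E"
begin

lemma df_add: "f \<in> D \<Longrightarrow> g \<in> D \<Longrightarrow> (\<lambda>x. f x + g x) \<in> D"
  using DF unfolding dirichlet_form_def by blast
lemma df_smult: "f \<in> D \<Longrightarrow> (\<lambda>x. a * f x) \<in> D"
  using DF unfolding dirichlet_form_def by blast
lemma df_ladd: "f \<in> D \<Longrightarrow> g \<in> D \<Longrightarrow> h \<in> D \<Longrightarrow> E (\<lambda>x. f x + g x) h = E f h + E g h"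
  using DF unfolding dirichlet_form_def by blast
lemma df_lsmult: "f \<in> D \<Longrightarrow> h \<in> D \<Longrightarrow> E (\<lambda>x. a * f x) h = a * E f h"
  using DF unfolding dirichlet_form_def by blast
lemma df_sym: "f \<in> D \<Longrightarrow> g \<in> D \<Longrightarrow> E f g = E g f"
  using DF unfolding dirichlet_form_def by blast
lemma df_pos: "f \<in> D \<Longrightarrow> E f f \<ge> 0"
  using DF unfolding dirichlet_form_def by blast
lemma df_sq: "f \<in> D \<Longrightarrow> sq_int \<mu> f"
  using DF unfolding dirichlet_form_def by blast

lemma df_radd: "f \<in> D \<Longrightarrow> g \<in> D \<Longrightarrow> h \<in> D \<Longrightarrow> E h (\<lambda>x. f x + g x) = E h f + E h g"
proof -
  assume f: "f \<in> D" and g: "g \<in> D" and h: "h \<in> D"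
  have "E h (\<lambda>x. f x + g x) = E (\<lambda>x. f x + g x) h" by (rule df_sym[OF h df_add[OF f g]])
  also have "\<dots> = E f h + E g h" by (rule df_ladd[OF f g h])
  also have "\<dots> = E h f + E h g" using df_sym[OF f h] df_sym[OF g h] by simp
  finally show ?thesis .
qed
lemma df_rsmult: "f \<in> D \<Longrightarrow> h \<in> D \<Longrightarrow> E h (\<lambda>x. a * f x) = a * E h f"
proof -
  assume f: "f \<in> D" and h: "h \<in> D"
  have "E h (\<lambda>x. a * f x) = E (\<lambda>x. a * f x) h" by (rule df_sym[OF h df_smult[OF f]])
  also have "\<dots> = a * E f h" by (rule df_lsmult[OF f h])
  also have "\<dots> = a * E h f" using df_sym[OF f h] by simp
  finally show ?thesis .
qed

lemma df_scale: "f \<in> D \<Longrightarrow> E (\<lambda>x. a * f x) (\<lambda>x. a * f x) = a\<^sup>2 * E f f"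
proof -
  assume f: "f \<in> D"
  have "E (\<lambda>x. a * f x) (\<lambda>x. a * f x) = a * E f (\<lambda>x. a * f x)" by (rule df_lsmult[OF f df_smult[OF f]])
  also have "\<dots> = a * (a * E f f)" by (simp only: df_rsmult[OF f f])
  finally show ?thesis by (simp add: power2_eq_square)
qed

lemma df_expand:
  assumes one: "(\<lambda>x. 1) \<in> D" and g: "g \<in> D"
  shows "(\<lambda>x. g x + c * 1) \<in> D"
    "E (\<lambda>x. g x + c * 1) (\<lambda>x. g x + c * 1)
       = E g g + c * E g (\<lambda>x. 1) + c * (E (\<lambda>x. 1) g + c * E (\<lambda>x. 1) (\<lambda>x. 1))"
proof -
  have t1: "(\<lambda>x. c * 1) \<in> D" by (rule df_smult[OF one(1)])
  show gp: "(\<lambda>x. g x + c * 1) \<in> D" by (rule df_add[OF g t1])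
  have a1: "E g (\<lambda>x. g x + c * 1) = E g g + c * E g (\<lambda>x. 1)"
    using df_radd[OF g t1 g] df_rsmult[OF one(1) g, of c] by (simp only:)
  have a2: "E (\<lambda>x. 1) (\<lambda>x. g x + c * 1) = E (\<lambda>x. 1) g + c * E (\<lambda>x. 1) (\<lambda>x. 1)"
    using df_radd[OF g t1 one(1)] df_rsmult[OF one(1) one(1), of c] by (simp only:)
  have a3: "E (\<lambda>x. c * 1) (\<lambda>x. g x + c * 1) = c * E (\<lambda>x. 1) (\<lambda>x. g x + c * 1)"
    by (rule df_lsmult[OF one(1) gp])
  have "E (\<lambda>x. g x + c * 1) (\<lambda>x. g x + c * 1) = E g (\<lambda>x. g x + c * 1) + E (\<lambda>x. c * 1) (\<lambda>x. g x + c * 1)"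
    by (rule df_ladd[OF g t1 gp])
  also have "\<dots> = E g g + c * E g (\<lambda>x. 1) + c * (E (\<lambda>x. 1) g + c * E (\<lambda>x. 1) (\<lambda>x. 1))"
    by (simp only: a1 a2 a3)
  finally show "E (\<lambda>x. g x + c * 1) (\<lambda>x. g x + c * 1)
       = E g g + c * E g (\<lambda>x. 1) + c * (E (\<lambda>x. 1) g + c * E (\<lambda>x. 1) (\<lambda>x. 1))" .
qed

lemma df_one_orth:
  assumes one: "(\<lambda>x. 1) \<in> D" "E (\<lambda>x. 1) (\<lambda>x. 1) = 0" and h: "h \<in> D"
  shows "E (\<lambda>x. 1) h = 0"
proof (rule ccontr)
  assume ne: "E (\<lambda>x. 1) h \<noteq> 0"
  define b where "b = E (\<lambda>x. 1) h"
  have bne: "b \<noteq> 0" using ne b_def by simp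
  have sym: "E h (\<lambda>x. 1) = b" using df_sym[OF h one(1)] b_def by simp
  define t where "t = - (E h h + 1) / (2 * b)"
  have eq: "E (\<lambda>x. h x + t * 1) (\<lambda>x. h x + t * 1) = E h h + t * b + t * (b + t * 0)"
    using df_expand(2)[OF one(1) h, of t] unfolding sym b_def[symmetric] one(2) .
  have "E h h + t * b + t * (b + t * 0) = -1" unfolding t_def using bne by (simp add: field_simps)
  then show False using df_pos[OF df_expand(1)[OF one(1) h, of t]] eq by linarith
qed

lemma df_shift:
  assumes one: "(\<lambda>x. 1) \<in> D" "E (\<lambda>x. 1) (\<lambda>x. 1) = 0" and g: "g \<in> D"
  shows "(\<lambda>x. g x + c) \<in> D" "E (\<lambda>x. g x + c) (\<lambda>x. g x + c) = E g g"
proof -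
  have o1: "E (\<lambda>x. 1) g = 0" by (rule df_one_orth[OF one g])
  have o2: "E g (\<lambda>x. 1) = 0" using o1 df_sym[OF g one(1)] by simp
  have e: "(\<lambda>x. g x + c * 1) = (\<lambda>x. g x + c)" by simp
  show "(\<lambda>x. g x + c) \<in> D" using df_expand(1)[OF one(1) g, of c] unfolding e .
  show "E (\<lambda>x. g x + c) (\<lambda>x. g x + c) = E g g" using df_expand(2)[OF one(1) g, of c] unfolding e o1 o2 one(2) by simp
qed

end

lemma orlicz_weight:
  fixes \<mu> :: "'a measure"
  assumes mu: "prob_space \<mu>"
    and DF: "dirichlet_form \<mu> D E"
    and C12: "C1 \<ge> 0" "C2 \<ge> 0"
    and orlicz_ineq: "\<And>g. g \<in> D \<Longrightarrow> (\<integral>x. (g x)\<^sup>2 \<partial>\<mu>) = 1 \<Longrightarrow>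
           orlicz_norm \<mu> \<Phi> (\<lambda>x. (g x)\<^sup>2) \<le> ereal (C1 * E g g + C2 * (\<integral>x. (g x)\<^sup>2 \<partial>\<mu>))"
    and c0: "c0 > 0" and Mc0: "(\<integral>\<^sup>+x. young_conj \<Phi> (\<bar>w x\<bar> / c0) \<partial>\<mu>) \<le> 1"
    and wm: "w \<in> borel_measurable \<mu>" and wpos: "\<And>x. w x \<ge> 0"
    and h: "h \<in> D"
  shows "(\<integral>\<^sup>+x. ennreal (w x * (h x)\<^sup>2) \<partial>\<mu>) \<le> ennreal (c0 * (C1 * E h h + C2 * (\<integral>x. (h x)\<^sup>2 \<partial>\<mu>)))"
proof -
  interpret prob_space \<mu> by (fact mu)
  have hsq: "sq_int \<mu> h" by (rule df_sq[OF DF h])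
  have hm: "h \<in> borel_measurable \<mu>" and hi: "integrable \<mu> (\<lambda>x. (h x)\<^sup>2)"
    using hsq unfolding sq_int_def by auto
  define s where "s = (\<integral>x. (h x)\<^sup>2 \<partial>\<mu>)"
  have s0: "s \<ge> 0" unfolding s_def by simp
  have Epos: "E h h \<ge> 0" by (rule df_pos[OF DF h])
  show ?thesis
  proof (cases "s = 0")
    case True
    have "AE x in \<mu>. (h x)\<^sup>2 = 0"
      using True hi unfolding s_def by (subst integral_nonneg_eq_0_iff_AE[symmetric]) auto
    then have "(\<integral>\<^sup>+x. ennreal (w x * (h x)\<^sup>2) \<partial>\<mu>) = (\<integral>\<^sup>+x. 0 \<partial>\<mu>)"
      by (intro nn_integral_cong_AE) (auto elim!: eventually_mono)
    then show ?thesis by simp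
  next
    case False
    then have spos: "s > 0" using s0 by simp
    define k where "k x = (1 / sqrt s) * h x" for x
    have kD: "k \<in> D" unfolding k_def[abs_def] by (rule df_smult[OF DF h])
    have ksq: "(k x)\<^sup>2 = (1 / s) * (h x)\<^sup>2" for x
      unfolding k_def using spos by (simp add: power_mult_distrib power_divide)
    have ki: "integrable \<mu> (\<lambda>x. (k x)\<^sup>2)" unfolding ksq using hi by simp
    have kint: "(\<integral>x. (k x)\<^sup>2 \<partial>\<mu>) = 1" unfolding ksq using spos by (simp add: s_def[symmetric])
    have Ek: "E k k = E h h / s"
      unfolding k_def[abs_def] using df_scale[OF DF h, of "1 / sqrt s"] spos by (simp add: power_divide)
    have nb: "orlicz_norm \<mu> \<Phi> (\<lambda>x. (k x)\<^sup>2) \<le> ereal (C1 * (E h h / s) + C2)"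
      using orlicz_ineq[OF kD kint] unfolding kint Ek by simp
    have wm': "(\<lambda>x. min (w x) (real n)) \<in> borel_measurable \<mu>" for n
      using wm by measurable
    have step: "(\<integral>\<^sup>+x. ennreal (min (w x) (real n) * (h x)\<^sup>2) \<partial>\<mu>) \<le> ennreal (c0 * (C1 * E h h + C2 * s))" for n
    proof -
      define u where "u x = min (w x) (real n) / c0" for x
      have um: "u \<in> borel_measurable \<mu>" unfolding u_def[abs_def] using wm' by measurable
      have u0: "u x \<ge> 0" for x unfolding u_def using wpos[of x] c0 by simp
      have ul: "u x \<le> real n / c0" for x unfolding u_def using c0 by (simp add: divide_right_mono)
      have g1: "orlicz_gauge \<mu> (young_conj \<Phi>) u \<le> 1"
      proof (rule gauge_le1)
        have "(\<integral>\<^sup>+ x. young_conj \<Phi> \<bar>u x\<bar> \<partial>\<mu>) \<le> (\<integral>\<^sup>+x. young_conj \<Phi> (\<bar>w x\<bar> / c0) \<partial>\<mu>)"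
        proof (rule nn_integral_mono)
          fix x
          have "\<bar>u x\<bar> \<le> \<bar>w x\<bar> / c0" unfolding u_def using wpos[of x] c0 by (simp add: divide_right_mono)
          then show "young_conj \<Phi> \<bar>u x\<bar> \<le> young_conj \<Phi> (\<bar>w x\<bar> / c0)"
            by (intro young_conj_mono) auto
        qed
        then show "(\<integral>\<^sup>+ x. young_conj \<Phi> \<bar>u x\<bar> \<partial>\<mu>) \<le> 1" using Mc0 by simp
      qed
      have kui: "integrable \<mu> (\<lambda>x. (k x)\<^sup>2 * u x)"
      proof (rule Bochner_Integration.integrable_bound)
        show "integrable \<mu> (\<lambda>x. real n / c0 * (k x)\<^sup>2)" using ki by simp
        show "(\<lambda>x. (k x)\<^sup>2 * u x) \<in> borel_measurable \<mu>"
        proof -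
          have km: "k \<in> borel_measurable \<mu>" using df_sq[OF DF kD] unfolding sq_int_def by blast
          note [measurable] = km um
          show ?thesis by measurable
        qed
        show "AE x in \<mu>. norm ((k x)\<^sup>2 * u x) \<le> norm (real n / c0 * (k x)\<^sup>2)"
        proof (rule AE_I2)
          fix x
          have "(k x)\<^sup>2 * u x \<le> (k x)\<^sup>2 * (real n / c0)" using ul[of x] by (intro mult_left_mono) auto
          then show "norm ((k x)\<^sup>2 * u x) \<le> norm (real n / c0 * (k x)\<^sup>2)"
            using u0[of x] c0 by (simp add: mult.commute)
        qed
      qed
      have "ereal (\<integral>x. (k x)\<^sup>2 * u x \<partial>\<mu>) \<le> orlicz_norm \<mu> \<Phi> (\<lambda>x. (k x)\<^sup>2)"
        unfolding orlicz_norm_def by (rule SUP_upper) (use um g1 kui in auto)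
      also have "\<dots> \<le> ereal (C1 * (E h h / s) + C2)" by (rule nb)
      finally have A: "(\<integral>x. (k x)\<^sup>2 * u x \<partial>\<mu>) \<le> C1 * (E h h / s) + C2" by simp
      have B: "(\<integral>x. min (w x) (real n) * (h x)\<^sup>2 \<partial>\<mu>) = (s * c0) * (\<integral>x. (k x)\<^sup>2 * u x \<partial>\<mu>)"
      proof -
        have "(\<lambda>x. min (w x) (real n) * (h x)\<^sup>2) = (\<lambda>x. (s * c0) * ((k x)\<^sup>2 * u x))"
          using spos c0 unfolding ksq u_def by (auto simp: field_simps)
        then show ?thesis by simp
      qed
      have C: "(\<integral>x. min (w x) (real n) * (h x)\<^sup>2 \<partial>\<mu>) \<le> c0 * (C1 * E h h + C2 * s)"
      proof -
        have "(s * c0) * (\<integral>x. (k x)\<^sup>2 * u x \<partial>\<mu>) \<le> (s * c0) * (C1 * (E h h / s) + C2)"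
          using A spos c0 by (intro mult_left_mono) auto
        also have "\<dots> = c0 * (C1 * E h h + C2 * s)" using spos by (simp add: field_simps)
        finally show ?thesis using B by simp
      qed
      have mi: "integrable \<mu> (\<lambda>x. min (w x) (real n) * (h x)\<^sup>2)"
      proof -
        have "(\<lambda>x. min (w x) (real n) * (h x)\<^sup>2) = (\<lambda>x. (s * c0) * ((k x)\<^sup>2 * u x))"
          using spos c0 unfolding ksq u_def by (auto simp: field_simps)
        then show ?thesis using kui by simp
      qed
      have "(\<integral>\<^sup>+x. ennreal (min (w x) (real n) * (h x)\<^sup>2) \<partial>\<mu>) = ennreal (\<integral>x. min (w x) (real n) * (h x)\<^sup>2 \<partial>\<mu>)"
        by (rule nn_integral_eq_integral[OF mi]) (use wpos in simp)
      also have "\<dots> \<le> ennreal (c0 * (C1 * E h h + C2 * s))" using C by (rule ennreal_leI)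
      finally show ?thesis .
    qed
    have inc: "incseq (\<lambda>n x. ennreal (min (w x) (real n) * (h x)\<^sup>2))"
      by (auto simp: incseq_def le_fun_def intro!: ennreal_leI mult_right_mono)
    have ptw: "(SUP n. ennreal (min (w x) (real n) * (h x)\<^sup>2)) = ennreal (w x * (h x)\<^sup>2)" for x
    proof (rule antisym)
      show "(SUP n. ennreal (min (w x) (real n) * (h x)\<^sup>2)) \<le> ennreal (w x * (h x)\<^sup>2)"
        by (rule SUP_least) (auto intro!: ennreal_leI mult_right_mono)
      have "min (w x) (real (nat \<lceil>w x\<rceil>)) = w x" by (simp add: real_nat_ceiling_ge)
      then show "ennreal (w x * (h x)\<^sup>2) \<le> (SUP n. ennreal (min (w x) (real n) * (h x)\<^sup>2))"
        by (intro SUP_upper2[where i="nat \<lceil>w x\<rceil>"]) auto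
    qed
    have "(\<integral>\<^sup>+x. ennreal (w x * (h x)\<^sup>2) \<partial>\<mu>) = (\<integral>\<^sup>+x. (SUP n. ennreal (min (w x) (real n) * (h x)\<^sup>2)) \<partial>\<mu>)"
      by (simp add: ptw)
    also have "\<dots> = (SUP n. (\<integral>\<^sup>+x. ennreal (min (w x) (real n) * (h x)\<^sup>2) \<partial>\<mu>))"
      by (rule nn_integral_monotone_convergence_SUP[OF inc]) (use wm' hm in measurable)
    also have "\<dots> \<le> ennreal (c0 * (C1 * E h h + C2 * s))"
      by (rule SUP_least) (rule step)
    finally show ?thesis unfolding s_def .
  qed
qed

lemma powr_lin_bound:
  fixes e y Y0 :: real
  assumes e: "e > 0" and y: "0 \<le> y" "y \<le> Y0"
  shows "(1 + y) powr e - 1 \<le> e * (1 + Y0) powr e * y"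
proof (cases "y = 0")
  case True then show ?thesis by simp
next
  case False
  then have y0: "y > 0" using y by simp
  have "\<exists>z. 1 < z \<and> z < 1 + y \<and> (1 + y) powr e - 1 powr e = (1 + y - 1) * (e * z powr (e - 1))"
    by (rule MVT2) (use y0 in \<open>auto intro!: has_real_derivative_powr\<close>)
  then obtain z where z: "1 < z" "z < 1 + y" and eq: "(1 + y) powr e - 1 = y * (e * z powr (e - 1))"
    by auto
  have "z powr (e - 1) \<le> z powr e" using z by (intro powr_mono) auto
  also have "\<dots> \<le> (1 + Y0) powr e" using z y e by (intro powr_mono2) auto
  finally have "z powr (e - 1) \<le> (1 + Y0) powr e" .
  then have "y * (e * z powr (e - 1)) \<le> y * (e * (1 + Y0) powr e)"
    using y e by (intro mult_left_mono) auto
  then show ?thesis using eq by (simp add: mult_ac)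
qed

definition kap :: "real \<Rightarrow> real \<Rightarrow> real \<Rightarrow> real" where
  "kap p q K = min (1 / (2 * K\<^sup>2 * ((p / (2 * q)) * (1 + 2 * K\<^sup>2) powr (p / (2 * q)))))
                   (1 / (2 powr (p / (2 * q)) * (1 + 2 * K)))"

lemma kap_pos: "p > 0 \<Longrightarrow> q > 0 \<Longrightarrow> K > 0 \<Longrightarrow> kap p q K > 0"
proof -
  assume "p > 0" "q > 0" "K > 0"
  moreover have h: "1 + 2 * K\<^sup>2 > 0" by (simp add: add_pos_nonneg)
  ultimately show ?thesis unfolding kap_def by (auto intro!: divide_pos_pos mult_pos_pos)
qed

lemma final_q:
  fixes p q K I Y Yq :: real
  assumes p: "p \<ge> 1" and q: "q > 0" and K: "K > 0" and I: "I \<ge> 0" and Y: "Y \<ge> 0" and Yq: "Yq \<ge> 0"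
    and b1: "Yq \<le> K * sqrt (I * (1 + I))" and b2: "Y \<le> K * sqrt (I * (1 + I))"
    and b3: "Yq \<le> (1 + Y) powr (q / p)"
  shows "kap p q K * ((1 + Yq\<^sup>2) powr (p / (2 * q)) - 1) \<le> I"
proof -
  define e where "e = p / (2 * q)"
  have e: "e > 0" unfolding e_def using p q by simp
  have br: "(1 + Yq\<^sup>2) powr e - 1 \<ge> 0" using e by (simp add: ge_one_powr_ge_zero)
  have kpos: "kap p q K > 0" using p q K by (intro kap_pos) auto
  have Yq2: "Yq\<^sup>2 \<le> K\<^sup>2 * (I * (1 + I))"
  proof -
    have "Yq\<^sup>2 \<le> (K * sqrt (I * (1 + I)))\<^sup>2" using b1 Yq by (intro power_mono) auto
    also have "\<dots> = K\<^sup>2 * (I * (1 + I))" using I by (simp add: power_mult_distrib)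
    finally show ?thesis .
  qed
  show ?thesis
  proof (cases "I \<le> 1")
    case True
    define L where "L = e * (1 + 2 * K\<^sup>2) powr e"
    have h: "1 + 2 * K\<^sup>2 > 0" by (simp add: add_pos_nonneg)
    have Lpos: "L > 0" unfolding L_def using e K h by simp
    have y1: "Yq\<^sup>2 \<le> 2 * K\<^sup>2 * I"
    proof -
      have "K\<^sup>2 * (I * (1 + I)) \<le> K\<^sup>2 * (I * 2)" using True I by (intro mult_left_mono) auto
      then show ?thesis using Yq2 by simp
    qed
    have "2 * K\<^sup>2 * I \<le> 2 * K\<^sup>2 * 1" using True by (intro mult_left_mono) auto
    then have y2: "Yq\<^sup>2 \<le> 2 * K\<^sup>2" using y1 by linarith
    have "(1 + Yq\<^sup>2) powr e - 1 \<le> L * Yq\<^sup>2"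
      using powr_lin_bound[OF e _ y2] unfolding L_def by (simp add: mult_ac)
    also have "\<dots> \<le> L * (2 * K\<^sup>2 * I)" using y1 Lpos by (intro mult_left_mono) auto
    finally have A: "(1 + Yq\<^sup>2) powr e - 1 \<le> L * (2 * K\<^sup>2 * I)" .
    have kle: "kap p q K \<le> 1 / (2 * K\<^sup>2 * L)" unfolding kap_def L_def e_def by simp
    have "kap p q K * ((1 + Yq\<^sup>2) powr e - 1) \<le> (1 / (2 * K\<^sup>2 * L)) * ((1 + Yq\<^sup>2) powr e - 1)"
      using kle br by (intro mult_right_mono) auto
    also have "\<dots> \<le> (1 / (2 * K\<^sup>2 * L)) * (L * (2 * K\<^sup>2 * I))"
      using A Lpos K by (intro mult_left_mono) auto
    also have "\<dots> = I" using Lpos K by (simp add: field_simps)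
    finally show ?thesis unfolding e_def .
  next
    case False
    then have I1: "I \<ge> 1" by simp
    have s2: "sqrt (I * (1 + I)) \<le> 2 * I"
    proof -
      have "I * (1 + I) \<le> (2 * I)\<^sup>2" using I1 by (simp add: power2_eq_square algebra_simps)
      then have "sqrt (I * (1 + I)) \<le> sqrt ((2 * I)\<^sup>2)" by (rule real_sqrt_le_mono)
      also have "sqrt ((2 * I)\<^sup>2) = 2 * I" using I by (simp only: real_sqrt_abs abs_of_nonneg)
      finally show ?thesis .
    qed
    have "K * sqrt (I * (1 + I)) \<le> K * (2 * I)" using s2 K by (intro mult_left_mono) auto
    then have YI: "Y \<le> 2 * K * I" using b2 by (simp add: mult_ac)
    have P1: "1 \<le> (1 + Y) powr (2 * q / p)" using Y p q by (intro ge_one_powr_ge_zero) auto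
    have yq: "Yq\<^sup>2 \<le> (1 + Y) powr (2 * q / p)"
    proof -
      have "Yq\<^sup>2 \<le> ((1 + Y) powr (q / p))\<^sup>2" using b3 Yq by (intro power_mono) auto
      also have "\<dots> = (1 + Y) powr (2 * q / p)"
        using Y by (simp add: powr_powr[symmetric] powr_realpow[symmetric] power2_eq_square powr_add[symmetric])
      finally show ?thesis .
    qed
    have "(1 + Yq\<^sup>2) powr e \<le> (2 * (1 + Y) powr (2 * q / p)) powr e"
      using yq P1 e by (intro powr_mono2) auto
    also have "\<dots> = 2 powr e * ((1 + Y) powr (2 * q / p)) powr e"
      using Y by (simp add: powr_mult)
    also have "((1 + Y) powr (2 * q / p)) powr e = 1 + Y"
      using Y p q unfolding e_def by (simp add: powr_powr)
    finally have A: "(1 + Yq\<^sup>2) powr e - 1 \<le> 2 powr e * (1 + 2 * K) * I"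
    proof -
      assume h: "(1 + Yq\<^sup>2) powr e \<le> 2 powr e * (1 + Y)"
      have "2 powr e * (1 + Y) \<le> 2 powr e * (1 + 2 * K * I)" using YI by (intro mult_left_mono) auto
      also have "\<dots> \<le> 2 powr e * ((1 + 2 * K) * I)" using I1 K by (intro mult_left_mono) (auto simp: algebra_simps)
      finally have c: "(1 + Yq\<^sup>2) powr e \<le> 2 powr e * ((1 + 2 * K) * I)" using h by (rule order.trans[rotated])
      have "2 powr e * (1 + 2 * K) * I = 2 powr e * ((1 + 2 * K) * I)" by (simp only: mult.assoc)
      then show ?thesis using c by linarith
    qed
    have kle: "kap p q K \<le> 1 / (2 powr e * (1 + 2 * K))" unfolding kap_def e_def by simp
    have "kap p q K * ((1 + Yq\<^sup>2) powr e - 1) \<le> (1 / (2 powr e * (1 + 2 * K))) * ((1 + Yq\<^sup>2) powr e - 1)"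
      using kle br by (intro mult_right_mono) auto
    also have "\<dots> \<le> (1 / (2 powr e * (1 + 2 * K))) * (2 powr e * (1 + 2 * K) * I)"
      using A K by (intro mult_left_mono) auto
    also have "\<dots> = I"
    proof -
      have d: "2 powr e * (1 + 2 * K) \<noteq> 0" using K by simp
      have "\<forall>a::real. a \<noteq> 0 \<longrightarrow> (1 / a) * (a * I) = I" by simp
      then show ?thesis using d by blast
    qed
    finally show ?thesis unfolding e_def .
  qed
qed

lemma young_pt:
  fixes t r l :: real
  assumes t: "t \<ge> 0" and r: "0 < r" "r \<le> 1" and l: "l > 0"
  shows "t powr r \<le> r * l powr (r - 1) * t + (1 - r) * l powr r"
proof (cases "t = 0")
  case True then show ?thesis using r l by simp
next
  case False
  then have tp: "t > 0" using t by simp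
  have "(t / l) powr r * 1 powr (1 - r) \<le> r * (t / l) + (1 - r) * 1"
    by (rule Youngs_inequality_0) (use r tp l in auto)
  then have A: "t powr r / l powr r \<le> r * (t / l) + (1 - r)" using tp l by (simp add: powr_divide)
  have lr: "l powr r > 0" using l by simp
  have "t powr r \<le> (r * (t / l) + (1 - r)) * l powr r"
    using A lr by (simp add: divide_le_eq)
  also have "\<dots> = r * t * (l powr r / l) + (1 - r) * l powr r" by (simp add: field_simps)
  also have "l powr r / l = l powr (r - 1)" using l by (simp add: powr_diff)
  finally show ?thesis by (simp add: mult_ac)
qed

lemma jensen_pow:
  fixes \<pi> :: "'b measure" and Dz :: "'b \<Rightarrow> real"
  assumes ps: "prob_space \<pi>" and Dm: "Dz \<in> borel_measurable \<pi>" and D0: "\<And>z. Dz z \<ge> 0"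
    and q: "0 < q" "q \<le> p"
    and fin: "(\<integral>\<^sup>+z. ennreal (Dz z powr p) \<partial>\<pi>) = ennreal X" and X: "X \<ge> 0"
  shows "(\<integral>\<^sup>+z. ennreal (Dz z powr q) \<partial>\<pi>) \<le> ennreal ((1 + X) powr (q / p))"
proof -
  interpret prob_space \<pi> by (fact ps)
  define r where "r = q / p"
  define l where "l = 1 + X"
  have p: "p > 0" using q by simp
  have r: "0 < r" "r \<le> 1" unfolding r_def using q p by auto
  have l: "l > 0" unfolding l_def using X by simp
  define \<alpha> where "\<alpha> = r * l powr (r - 1)"
  define \<beta> where "\<beta> = (1 - r) * l powr r"
  have a0: "\<alpha> \<ge> 0" unfolding \<alpha>_def using r by simp
  have b0: "\<beta> \<ge> 0" unfolding \<beta>_def using r by simp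
  have pt: "Dz z powr q \<le> \<alpha> * Dz z powr p + \<beta>" for z
  proof -
    have "Dz z powr q = (Dz z powr p) powr r" unfolding r_def using p by (simp add: powr_powr)
    also have "\<dots> \<le> \<alpha> * Dz z powr p + \<beta>"
      using young_pt[of "Dz z powr p" r l] r l unfolding \<alpha>_def \<beta>_def by (simp add: mult_ac)
    finally show ?thesis .
  qed
  have pm: "(\<lambda>z. ennreal (Dz z powr p)) \<in> borel_measurable \<pi>" using Dm by measurable
  have "(\<integral>\<^sup>+z. ennreal (Dz z powr q) \<partial>\<pi>) \<le> (\<integral>\<^sup>+z. ennreal \<alpha> * ennreal (Dz z powr p) + ennreal \<beta> \<partial>\<pi>)"
  proof (rule nn_integral_mono)
    fix z
    have "ennreal (Dz z powr q) \<le> ennreal (\<alpha> * Dz z powr p + \<beta>)" using pt by (rule ennreal_leI)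
    also have "\<dots> = ennreal \<alpha> * ennreal (Dz z powr p) + ennreal \<beta>"
      using a0 b0 by (simp add: ennreal_plus ennreal_mult)
    finally show "ennreal (Dz z powr q) \<le> ennreal \<alpha> * ennreal (Dz z powr p) + ennreal \<beta>" .
  qed
  also have "\<dots> = ennreal \<alpha> * (\<integral>\<^sup>+z. ennreal (Dz z powr p) \<partial>\<pi>) + (\<integral>\<^sup>+z. ennreal \<beta> \<partial>\<pi>)"
    using pm by (simp add: nn_integral_add nn_integral_cmult)
  also have "\<dots> = ennreal (\<alpha> * X + \<beta>)"
    using a0 b0 X by (simp add: fin emeasure_space_1 ennreal_plus ennreal_mult)
  also have "\<dots> \<le> ennreal (l powr r)"
  proof (rule ennreal_leI)
    have "\<alpha> * X \<le> \<alpha> * l" unfolding l_def using a0 by (intro mult_left_mono) auto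
    also have "\<alpha> * l = r * l powr r" unfolding \<alpha>_def using l by (simp add: powr_diff field_simps)
    finally show "\<alpha> * X + \<beta> \<le> l powr r" unfolding \<beta>_def by (simp add: algebra_simps)
  qed
  finally show ?thesis unfolding l_def r_def .
qed

lemma cost_pt:
  fixes x y x0 :: "'a::metric_space"
  assumes q: "1 \<le> q" "q \<le> p"
  shows "dist x y powr q \<le> 2 powr p * (1 + dist x x0 powr p) + 2 powr p * (1 + dist y x0 powr p)"
proof -
  define a where "a = dist x x0"
  define b where "b = dist y x0"
  define m where "m = max a b"
  have m0: "m \<ge> 0" unfolding m_def a_def b_def by (simp add: le_max_iff_disj)
  have "dist x y \<le> a + b" unfolding a_def b_def by (metis dist_commute dist_triangle)
  also have "\<dots> \<le> 2 * m" unfolding m_def by simp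
  finally have dm: "dist x y \<le> 2 * m" .
  have "dist x y powr q \<le> (2 * m) powr q" using dm q by (intro powr_mono2) auto
  also have "\<dots> = 2 powr q * m powr q" using m0 by (simp add: powr_mult)
  also have "\<dots> \<le> 2 powr p * (1 + m powr p)"
  proof (rule mult_mono)
    show "2 powr q \<le> 2 powr p" using q by (intro powr_mono) auto
    show "m powr q \<le> 1 + m powr p"
    proof (cases "m \<le> 1")
      case True
      then have "m powr q \<le> 1" using m0 q by (intro powr_le1) auto
      then show ?thesis using powr_ge_zero[of m p] by linarith
    next
      case False
      then have "m powr q \<le> m powr p" using q by (intro powr_mono) auto
      then show ?thesis by linarith
    qed
  qed auto
  also have "\<dots> \<le> 2 powr p * (1 + a powr p) + 2 powr p * (1 + b powr p)"
  proof -
    have "m powr p \<le> 1 + a powr p + b powr p" unfolding m_def by (auto simp: max_def)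
    then have "2 powr p * (1 + m powr p) \<le> 2 powr p * (2 + a powr p + b powr p)"
      by (intro mult_left_mono) auto
    then show ?thesis by (simp add: algebra_simps)
  qed
  finally show ?thesis unfolding a_def b_def .
qed

definition Kc :: "real \<Rightarrow> real \<Rightarrow> real \<Rightarrow> real \<Rightarrow> real" where
  "Kc c0 C1 C2 Cp = ((2 * Cp + c0 * (C1 + 2 * C2 * Cp)) + (4 + c0 * (C1 + 4 * C2))) / 2 + 1"

lemma amgm_eps:
  fixes x y e :: real
  assumes "e > 0"
  shows "x * y \<le> e / 2 * x\<^sup>2 + 1 / (2 * e) * y\<^sup>2"
proof -
  have "0 \<le> (e * x - y)\<^sup>2 / (2 * e)" using assms by simp
  also have "(e * x - y)\<^sup>2 / (2 * e) = e / 2 * x\<^sup>2 + 1 / (2 * e) * y\<^sup>2 - x * y"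
    using assms by (simp add: power2_eq_square field_simps)
  finally show ?thesis by simp
qed

lemma ennreal_lin2:
  fixes al be u v :: real
  assumes "al \<ge> 0" "be \<ge> 0" "u \<ge> 0" "v \<ge> 0"
  shows "ennreal (al * u + be * v) = ennreal al * ennreal u + ennreal be * ennreal v"
  using assms by (simp add: ennreal_plus ennreal_mult)

lemma per_nu:
  fixes \<mu> :: "'a::polish_space measure" and f :: "'a \<Rightarrow> real"
  assumes mu: "prob_space \<mu>" "sets \<mu> = sets borel"
    and DF: "dirichlet_form \<mu> D E"
    and cons: "conservative_form \<mu> D E"
    and C12: "C1 \<ge> 0" "C2 \<ge> 0"
    and orlicz_ineq: "\<And>g. g \<in> D \<Longrightarrow> (\<integral>x. (g x)\<^sup>2 \<partial>\<mu>) = 1 \<Longrightarrow>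
           orlicz_norm \<mu> \<Phi> (\<lambda>x. (g x)\<^sup>2) \<le> ereal (C1 * E g g + C2 * (\<integral>x. (g x)\<^sup>2 \<partial>\<mu>))"
    and poincare: "\<And>g. g \<in> D \<Longrightarrow>
           (\<integral>x. (g x)\<^sup>2 \<partial>\<mu>) - (\<integral>x. g x \<partial>\<mu>)\<^sup>2 \<le> C_P * E g g"
    and c0: "c0 > 0" and Mc0: "(\<integral>\<^sup>+x. young_conj \<Phi> (\<bar>dist x x0 powr p\<bar> / c0) \<partial>\<mu>) \<le> 1"
    and fm: "f \<in> borel_measurable \<mu>" and fpos: "\<And>x. f x \<ge> 0"
    and gD: "(\<lambda>x. sqrt (f x)) \<in> D" and f1: "(\<integral>\<^sup>+x. ennreal (f x) \<partial>\<mu>) = 1"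
  shows "(\<integral>\<^sup>+x. ennreal ((1 + dist x x0 powr p) * \<bar>f x - 1\<bar>) \<partial>\<mu>)
     \<le> ennreal (Kc c0 C1 C2 (max C_P 0) * sqrt (E (\<lambda>x. sqrt (f x)) (\<lambda>x. sqrt (f x))
                                    * (1 + E (\<lambda>x. sqrt (f x)) (\<lambda>x. sqrt (f x)))))"
proof -
  interpret prob_space \<mu> by (fact mu(1))
  define g where "g x = sqrt (f x)" for x
  have gD': "g \<in> D" using gD unfolding g_def[abs_def] .
  define I where "I = E g g"
  define Cp where "Cp = max C_P 0"
  have Cp0: "Cp \<ge> 0" unfolding Cp_def by simp
  have I0: "I \<ge> 0" unfolding I_def by (rule df_pos[OF DF gD'])
  have one: "(\<lambda>x. 1) \<in> D" "E (\<lambda>x. 1) (\<lambda>x. 1) = 0" using cons unfolding conservative_form_def by auto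
  have gsq: "(g x)\<^sup>2 = f x" for x unfolding g_def using fpos[of x] by simp
  have g0: "g x \<ge> 0" for x unfolding g_def using fpos[of x] by simp
  have gm: "g \<in> borel_measurable \<mu>" and g2i: "integrable \<mu> (\<lambda>x. (g x)\<^sup>2)"
    using df_sq[OF DF gD'] unfolding sq_int_def by auto
  have gi: "integrable \<mu> g" by (rule square_integrable_imp_integrable[OF gm g2i])
  have g2int: "(\<integral>x. (g x)\<^sup>2 \<partial>\<mu>) = 1"
  proof -
    have "ennreal (\<integral>x. (g x)\<^sup>2 \<partial>\<mu>) = (\<integral>\<^sup>+x. ennreal ((g x)\<^sup>2) \<partial>\<mu>)"
      by (rule nn_integral_eq_integral[OF g2i, symmetric]) simp
    also have "\<dots> = 1" unfolding gsq by (rule f1)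
    finally show ?thesis by simp
  qed
  define mg where "mg = (\<integral>x. g x \<partial>\<mu>)"
  have mg0: "mg \<ge> 0" unfolding mg_def using g0 by simp
  have mg2: "mg\<^sup>2 \<le> 1"
    using variance_eq[OF gi g2i] variance_positive[of g] g2int unfolding mg_def by simp
  have mg1: "mg \<le> 1"
  proof (rule ccontr)
    assume "\<not> mg \<le> 1"
    then have "1 < mg" by simp
    then have "1 < mg\<^sup>2" by (metis less_1_mult one_less_power power2_eq_square zero_less_numeral numeral_One)
    then show False using mg2 by simp
  qed
  have sqint: "(\<integral>x. (g x + c)\<^sup>2 \<partial>\<mu>) = 1 + 2 * c * mg + c\<^sup>2" for c
  proof -
    have eq: "(\<lambda>x. (g x + c)\<^sup>2) = (\<lambda>x. (g x)\<^sup>2 + ((2 * c) * g x + c\<^sup>2))"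
      by (simp add: power2_eq_square algebra_simps)
    have "(\<integral>x. (g x)\<^sup>2 + ((2 * c) * g x + c\<^sup>2) \<partial>\<mu>) = (\<integral>x. (g x)\<^sup>2 \<partial>\<mu>) + (\<integral>x. (2 * c) * g x + c\<^sup>2 \<partial>\<mu>)"
      using g2i gi by (intro Bochner_Integration.integral_add) auto
    also have "(\<integral>x. (2 * c) * g x + c\<^sup>2 \<partial>\<mu>) = (\<integral>x. (2 * c) * g x \<partial>\<mu>) + (\<integral>x. c\<^sup>2 \<partial>\<mu>)"
      using gi by (intro Bochner_Integration.integral_add) auto
    finally show ?thesis unfolding eq g2int mg_def by (simp add: prob_space)
  qed
  have sqi: "integrable \<mu> (\<lambda>x. (g x + c)\<^sup>2)" for c
  proof -
    have eq: "(\<lambda>x. (g x + c)\<^sup>2) = (\<lambda>x. (g x)\<^sup>2 + ((2 * c) * g x + c\<^sup>2))"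
      by (simp add: power2_eq_square algebra_simps)
    show ?thesis unfolding eq using g2i gi by auto
  qed
  have poi: "1 - mg\<^sup>2 \<le> Cp * I"
  proof -
    have "1 - mg\<^sup>2 \<le> C_P * I" using poincare[OF gD'] g2int unfolding mg_def I_def by simp
    also have "\<dots> \<le> Cp * I" unfolding Cp_def using I0 by (intro mult_right_mono) auto
    finally show ?thesis .
  qed
  have Am: "(\<integral>x. (g x + (-1))\<^sup>2 \<partial>\<mu>) \<le> 2 * Cp * I"
  proof -
    have "(\<integral>x. (g x + (-1))\<^sup>2 \<partial>\<mu>) = 2 * (1 - mg)" unfolding sqint by simp
    also have "\<dots> \<le> 2 * ((1 - mg) * (1 + mg))"
    proof -
      have "0 \<le> (1 - mg) * mg" using mg0 mg1 by simp
      then have "1 - mg \<le> (1 - mg) * (1 + mg)" by (simp add: algebra_simps)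
      then show ?thesis by simp
    qed
    also have "\<dots> = 2 * (1 - mg\<^sup>2)" by (simp add: power2_eq_square algebra_simps)
    also have "\<dots> \<le> 2 * (Cp * I)" using poi by simp
    finally show ?thesis by simp
  qed
  have Ap: "(\<integral>x. (g x + 1)\<^sup>2 \<partial>\<mu>) \<le> 4"
    unfolding sqint using mg1 by simp
  have Dm: "(\<lambda>x. g x + c) \<in> D" "E (\<lambda>x. g x + c) (\<lambda>x. g x + c) = I" for c
    using df_shift[OF DF one gD'] unfolding I_def by auto
  have wm: "(\<lambda>x. dist x x0 powr p) \<in> borel_measurable \<mu>"
  proof -
    have "(\<lambda>x. dist x x0 powr p) \<in> borel_measurable borel" by measurable
    then show ?thesis using mu(2) measurable_cong_sets by blast
  qed
  have OW: "(\<integral>\<^sup>+x. ennreal (dist x x0 powr p * (g x + c)\<^sup>2) \<partial>\<mu>)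
      \<le> ennreal (c0 * (C1 * I + C2 * (\<integral>x. (g x + c)\<^sup>2 \<partial>\<mu>)))" for c
    using orlicz_weight[OF mu(1) DF C12 orlicz_ineq c0 Mc0 wm _ Dm(1)[of c]] Dm(2)[of c] by simp
  define a where "a = 2 * Cp + c0 * (C1 + 2 * C2 * Cp)"
  define b where "b = 4 + c0 * (C1 + 4 * C2)"
  have a0: "a \<ge> 0" unfolding a_def using Cp0 c0 C12 by simp
  have b0: "b > 0" unfolding b_def using c0 C12 by (simp add: add_pos_nonneg)
  have wA: "(\<integral>\<^sup>+x. ennreal ((1 + dist x x0 powr p) * (g x + (-1))\<^sup>2) \<partial>\<mu>) \<le> ennreal (a * I)"
  proof -
    have "(\<integral>\<^sup>+x. ennreal ((1 + dist x x0 powr p) * (g x + (-1))\<^sup>2) \<partial>\<mu>)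
       = (\<integral>\<^sup>+x. ennreal ((g x + (-1))\<^sup>2) + ennreal (dist x x0 powr p * (g x + (-1))\<^sup>2) \<partial>\<mu>)"
      by (intro nn_integral_cong) (simp add: ennreal_plus[symmetric] algebra_simps del: ennreal_plus)
    also have "\<dots> = (\<integral>\<^sup>+x. ennreal ((g x + (-1))\<^sup>2) \<partial>\<mu>) + (\<integral>\<^sup>+x. ennreal (dist x x0 powr p * (g x + (-1))\<^sup>2) \<partial>\<mu>)"
      using gm wm by (intro nn_integral_add) auto
    also have "(\<integral>\<^sup>+x. ennreal ((g x + (-1))\<^sup>2) \<partial>\<mu>) = ennreal (\<integral>x. (g x + (-1))\<^sup>2 \<partial>\<mu>)"
      by (rule nn_integral_eq_integral[OF sqi]) simp
    also have "ennreal (\<integral>x. (g x + (-1))\<^sup>2 \<partial>\<mu>) + (\<integral>\<^sup>+x. ennreal (dist x x0 powr p * (g x + (-1))\<^sup>2) \<partial>\<mu>)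
        \<le> ennreal (2 * Cp * I) + ennreal (c0 * (C1 * I + C2 * (2 * Cp * I)))"
    proof (rule add_mono)
      show "ennreal (\<integral>x. (g x + (-1))\<^sup>2 \<partial>\<mu>) \<le> ennreal (2 * Cp * I)" using Am by (rule ennreal_leI)
      have "c0 * (C1 * I + C2 * (\<integral>x. (g x + (-1))\<^sup>2 \<partial>\<mu>)) \<le> c0 * (C1 * I + C2 * (2 * Cp * I))"
        using Am c0 C12 by (intro mult_left_mono add_left_mono) auto
      then show "(\<integral>\<^sup>+x. ennreal (dist x x0 powr p * (g x + (-1))\<^sup>2) \<partial>\<mu>) \<le> ennreal (c0 * (C1 * I + C2 * (2 * Cp * I)))"
        using OW[of "-1"] by (meson ennreal_leI order.trans)
    qed
    also have "\<dots> = ennreal (a * I)"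
      using Cp0 I0 c0 C12 unfolding a_def by (subst ennreal_plus[symmetric]) (auto simp: algebra_simps)
    finally show ?thesis .
  qed
  have wB: "(\<integral>\<^sup>+x. ennreal ((1 + dist x x0 powr p) * (g x + 1)\<^sup>2) \<partial>\<mu>) \<le> ennreal (b * (1 + I))"
  proof -
    have "(\<integral>\<^sup>+x. ennreal ((1 + dist x x0 powr p) * (g x + 1)\<^sup>2) \<partial>\<mu>)
       = (\<integral>\<^sup>+x. ennreal ((g x + 1)\<^sup>2) + ennreal (dist x x0 powr p * (g x + 1)\<^sup>2) \<partial>\<mu>)"
      by (intro nn_integral_cong) (simp add: ennreal_plus[symmetric] algebra_simps del: ennreal_plus)
    also have "\<dots> = (\<integral>\<^sup>+x. ennreal ((g x + 1)\<^sup>2) \<partial>\<mu>) + (\<integral>\<^sup>+x. ennreal (dist x x0 powr p * (g x + 1)\<^sup>2) \<partial>\<mu>)"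
      using gm wm by (intro nn_integral_add) auto
    also have "(\<integral>\<^sup>+x. ennreal ((g x + 1)\<^sup>2) \<partial>\<mu>) = ennreal (\<integral>x. (g x + 1)\<^sup>2 \<partial>\<mu>)"
      by (rule nn_integral_eq_integral[OF sqi]) simp
    also have "ennreal (\<integral>x. (g x + 1)\<^sup>2 \<partial>\<mu>) + (\<integral>\<^sup>+x. ennreal (dist x x0 powr p * (g x + 1)\<^sup>2) \<partial>\<mu>)
        \<le> ennreal 4 + ennreal (c0 * (C1 * I + C2 * 4))"
    proof (rule add_mono)
      show "ennreal (\<integral>x. (g x + 1)\<^sup>2 \<partial>\<mu>) \<le> ennreal 4" using Ap by (rule ennreal_leI)
      have "c0 * (C1 * I + C2 * (\<integral>x. (g x + 1)\<^sup>2 \<partial>\<mu>)) \<le> c0 * (C1 * I + C2 * 4)"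
        using Ap c0 C12 by (intro mult_left_mono add_left_mono) auto
      then show "(\<integral>\<^sup>+x. ennreal (dist x x0 powr p * (g x + 1)\<^sup>2) \<partial>\<mu>) \<le> ennreal (c0 * (C1 * I + C2 * 4))"
        using OW[of 1] by (meson ennreal_leI order.trans)
    qed
    also have "\<dots> = ennreal (4 + c0 * (C1 * I + C2 * 4))"
      using I0 c0 C12 by (subst ennreal_plus[symmetric]) auto
    also have "\<dots> \<le> ennreal (b * (1 + I))"
    proof (rule ennreal_leI)
      have "4 + c0 * (C1 * I + C2 * 4) \<le> (4 + c0 * (C1 + 4 * C2)) + (4 + c0 * (C1 + 4 * C2)) * I"
        using I0 c0 C12 by (simp add: algebra_simps add_increasing mult_nonneg_nonneg)
      then show "4 + c0 * (C1 * I + C2 * 4) \<le> b * (1 + I)" unfolding b_def by (simp add: algebra_simps)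
    qed
    finally show ?thesis .
  qed
  define T where "T = (\<integral>\<^sup>+x. ennreal ((1 + dist x x0 powr p) * \<bar>f x - 1\<bar>) \<partial>\<mu>)"
  have Teps: "T \<le> ennreal (e / 2 * (a * I) + 1 / (2 * e) * (b * (1 + I)))" if e: "e > 0" for e
  proof -
    have "T \<le> (\<integral>\<^sup>+x. ennreal (e / 2) * ennreal ((1 + dist x x0 powr p) * (g x + (-1))\<^sup>2)
                  + ennreal (1 / (2 * e)) * ennreal ((1 + dist x x0 powr p) * (g x + 1)\<^sup>2) \<partial>\<mu>)"
      unfolding T_def
    proof (rule nn_integral_mono)
      fix x
      have w0: "1 + dist x x0 powr p \<ge> 0" by (simp add: add_nonneg_nonneg)
      have fx: "\<bar>f x - 1\<bar> = \<bar>g x - 1\<bar> * (g x + 1)"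
      proof -
        have "f x - 1 = (g x - 1) * (g x + 1)" using gsq[of x] by (simp add: power2_eq_square algebra_simps)
        then show ?thesis using g0[of x] by (simp add: abs_mult)
      qed
      have "\<bar>g x - 1\<bar> * (g x + 1) \<le> e / 2 * \<bar>g x - 1\<bar>\<^sup>2 + 1 / (2 * e) * (g x + 1)\<^sup>2"
        by (rule amgm_eps[OF e])
      then have "(1 + dist x x0 powr p) * \<bar>f x - 1\<bar>
          \<le> (1 + dist x x0 powr p) * (e / 2 * (g x + (-1))\<^sup>2 + 1 / (2 * e) * (g x + 1)\<^sup>2)"
        unfolding fx using w0 by (intro mult_left_mono) auto
      also have "\<dots> = e / 2 * ((1 + dist x x0 powr p) * (g x + (-1))\<^sup>2) + 1 / (2 * e) * ((1 + dist x x0 powr p) * (g x + 1)\<^sup>2)"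
        using e by (simp add: field_simps)
      finally have "ennreal ((1 + dist x x0 powr p) * \<bar>f x - 1\<bar>) \<le> ennreal (e / 2 * ((1 + dist x x0 powr p) * (g x + (-1))\<^sup>2) + 1 / (2 * e) * ((1 + dist x x0 powr p) * (g x + 1)\<^sup>2))"
        by (rule ennreal_leI)
      also have "\<dots> = ennreal (e / 2) * ennreal ((1 + dist x x0 powr p) * (g x + (-1))\<^sup>2)
                  + ennreal (1 / (2 * e)) * ennreal ((1 + dist x x0 powr p) * (g x + 1)\<^sup>2)"
        using e w0 by (intro ennreal_lin2) auto
      finally show "ennreal ((1 + dist x x0 powr p) * \<bar>f x - 1\<bar>) \<le> ennreal (e / 2) * ennreal ((1 + dist x x0 powr p) * (g x + (-1))\<^sup>2)
                  + ennreal (1 / (2 * e)) * ennreal ((1 + dist x x0 powr p) * (g x + 1)\<^sup>2)" .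
    qed
    also have "\<dots> = ennreal (e / 2) * (\<integral>\<^sup>+x. ennreal ((1 + dist x x0 powr p) * (g x + (-1))\<^sup>2) \<partial>\<mu>)
                  + ennreal (1 / (2 * e)) * (\<integral>\<^sup>+x. ennreal ((1 + dist x x0 powr p) * (g x + 1)\<^sup>2) \<partial>\<mu>)"
      using gm wm by (simp add: nn_integral_add nn_integral_cmult)
    also have "\<dots> \<le> ennreal (e / 2) * ennreal (a * I) + ennreal (1 / (2 * e)) * ennreal (b * (1 + I))"
      by (intro add_mono mult_left_mono wA wB) auto
    also have "\<dots> = ennreal (e / 2 * (a * I) + 1 / (2 * e) * (b * (1 + I)))"
      using e a0 b0 I0 by (intro ennreal_lin2[symmetric]) auto
    finally show ?thesis .
  qed
  define K where "K = Kc c0 C1 C2 (max C_P 0)"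
  have Kab: "K = (a + b) / 2 + 1" unfolding K_def Kc_def a_def b_def Cp_def ..
  define s where "s = sqrt (I * (1 + I))"
  have s0: "s \<ge> 0" unfolding s_def using I0 by simp
  have "T \<le> ennreal (K * s)"
  proof (cases "I = 0")
    case False
    then have Ip: "I > 0" using I0 by simp
    define e where "e = sqrt ((1 + I) / I)"
    have ep: "e > 0" unfolding e_def using Ip by simp
    have e2: "e\<^sup>2 = (1 + I) / I" unfolding e_def using Ip by simp
    have eI: "e * I = s"
    proof -
      have "(e * I)\<^sup>2 = e\<^sup>2 * I\<^sup>2" by (simp add: power_mult_distrib)
      also have "\<dots> = (1 + I) / I * I\<^sup>2" by (simp only: e2)
      also have "\<dots> = I * (1 + I)" using Ip by (simp add: power2_eq_square field_simps)
      finally have "(e * I)\<^sup>2 = I * (1 + I)" .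
      then show ?thesis unfolding s_def using ep Ip by (intro real_sqrt_unique[symmetric]) auto
    qed
    have Ie: "(1 + I) / e = s"
    proof -
      have "((1 + I) / e)\<^sup>2 = (1 + I)\<^sup>2 / e\<^sup>2" by (simp add: power_divide)
      also have "\<dots> = (1 + I)\<^sup>2 / ((1 + I) / I)" by (simp only: e2)
      also have "\<dots> = I * (1 + I)" using Ip by (simp add: power2_eq_square field_simps)
      finally have "((1 + I) / e)\<^sup>2 = I * (1 + I)" .
      then show ?thesis unfolding s_def using ep Ip by (intro real_sqrt_unique[symmetric]) auto
    qed
    have "e / 2 * (a * I) + 1 / (2 * e) * (b * (1 + I)) = a / 2 * (e * I) + b / 2 * ((1 + I) / e)"
      using ep by (simp add: field_simps)
    also have "\<dots> = (a + b) / 2 * s" unfolding eI Ie by (simp add: algebra_simps)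
    also have "\<dots> \<le> K * s" unfolding Kab using s0 by (intro mult_right_mono) auto
    finally show ?thesis using Teps[OF ep] by (meson ennreal_leI order.trans)
  next
    case True
    have T1: "T \<le> ennreal (b / (2 * e))" if "e > 0" for e
      using Teps[OF that] True by simp
    have T1': "T \<le> ennreal (b / (2 * 1))" by (rule T1) simp
    have "T \<noteq> \<top>" using neq_top_trans[OF ennreal_neq_top T1'] .
    then obtain t where t: "T = ennreal t" "t \<ge> 0" by (cases T) auto
    have "t \<le> 0"
    proof (rule ccontr)
      assume "\<not> t \<le> 0"
      then have tp: "t > 0" by simp
      have "ennreal t \<le> ennreal (b / (2 * (b / t)))" using T1[of "b / t"] b0 tp t by simp
      then have "t \<le> b / (2 * (b / t))" using b0 tp by (simp add: ennreal_le_iff)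
      also have "\<dots> = t / 2" using b0 tp by (simp add: field_simps)
      finally show False using tp by simp
    qed
    then have "T = 0" using t by simp
    then show ?thesis by simp
  qed
  then show ?thesis unfolding T_def K_def s_def I_def g_def .
qed

lemma Xq_bound:
  fixes \<mu> :: "'a::polish_space measure" and f :: "'a \<Rightarrow> real" and \<pi> :: "('a \<times> 'a) measure"
  assumes mu: "prob_space \<mu>" "sets \<mu> = sets borel"
    and fm: "f \<in> borel_measurable \<mu>"
    and cost: "\<forall>c W. c \<in> borel_measurable borel \<longrightarrow> W \<in> borel_measurable borel \<longrightarrow>
        (\<forall>x. c (x, x) = 0) \<longrightarrow> (\<forall>x y. c (x, y) \<le> W x + W y) \<longrightarrow>
        (\<integral>\<^sup>+z. c z \<partial>\<pi>) \<le> (\<integral>\<^sup>+x. W x * ennreal \<bar>f x - 1\<bar> \<partial>\<mu>)"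
    and Tb: "(\<integral>\<^sup>+x. ennreal ((1 + dist x x0 powr p) * \<bar>f x - 1\<bar>) \<partial>\<mu>) \<le> ennreal B"
    and B: "B \<ge> 0" and q: "1 \<le> q" "q \<le> p"
  shows "(\<integral>\<^sup>+z. ennreal (dist (fst z) (snd z) powr q) \<partial>\<pi>) \<le> ennreal (2 powr p * B)"
proof -
  define c where "c z = ennreal (dist (fst z) (snd z) powr q)" for z :: "'a \<times> 'a"
  define W where "W x = ennreal (2 powr p * (1 + dist x x0 powr p))" for x
  have cb: "c \<in> borel_measurable borel" unfolding c_def[abs_def] by measurable
  have Wb: "W \<in> borel_measurable borel" unfolding W_def[abs_def] by measurable
  have c0: "\<forall>x. c (x, x) = 0" unfolding c_def using q by simp
  have cW: "\<forall>x y. c (x, y) \<le> W x + W y"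
  proof (intro allI)
    fix x y
    have "c (x, y) \<le> ennreal (2 powr p * (1 + dist x x0 powr p) + 2 powr p * (1 + dist y x0 powr p))"
      unfolding c_def by (intro ennreal_leI) (simp add: cost_pt[OF q])
    also have "\<dots> = W x + W y" unfolding W_def
      by (intro ennreal_plus) (auto intro!: mult_nonneg_nonneg add_nonneg_nonneg)
    finally show "c (x, y) \<le> W x + W y" .
  qed
  have "(\<integral>\<^sup>+z. c z \<partial>\<pi>) \<le> (\<integral>\<^sup>+x. W x * ennreal \<bar>f x - 1\<bar> \<partial>\<mu>)"
    using cost cb Wb c0 cW by blast
  also have "\<dots> = (\<integral>\<^sup>+x. ennreal (2 powr p) * ennreal ((1 + dist x x0 powr p) * \<bar>f x - 1\<bar>) \<partial>\<mu>)"
    unfolding W_def by (intro nn_integral_cong) (simp add: ennreal_mult[symmetric] mult.assoc add_nonneg_nonneg)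
  also have "\<dots> = ennreal (2 powr p) * (\<integral>\<^sup>+x. ennreal ((1 + dist x x0 powr p) * \<bar>f x - 1\<bar>) \<partial>\<mu>)"
  proof (rule nn_integral_cmult)
    have "(\<lambda>x. ennreal ((1 + dist x x0 powr p) * \<bar>f x - 1\<bar>)) \<in> borel_measurable borel"
      using fm mu(2) measurable_cong_sets[of \<mu> borel] by measurable
    then show "(\<lambda>x. ennreal ((1 + dist x x0 powr p) * \<bar>f x - 1\<bar>)) \<in> borel_measurable \<mu>"
      using mu(2) measurable_cong_sets by blast
  qed
  also have "\<dots> \<le> ennreal (2 powr p) * ennreal B" by (intro mult_left_mono Tb) auto
  also have "\<dots> = ennreal (2 powr p * B)" using B by (simp add: ennreal_mult)
  finally show ?thesis unfolding c_def .
qed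

theorem corollary5p2:
  fixes \<mu> :: "'a::polish_space measure"
    and D :: "('a \<Rightarrow> real) set"
    and E :: "('a \<Rightarrow> real) \<Rightarrow> ('a \<Rightarrow> real) \<Rightarrow> real"
    and \<Phi> :: "real \<Rightarrow> ennreal"
    and C1 C2 C_P p :: real and x0 :: 'a
  assumes mu: "prob_space \<mu>" "sets \<mu> = sets borel"
    and DF: "dirichlet_form \<mu> D E"
    and erg: "ergodic_form \<mu> D E"
    and cons: "conservative_form \<mu> D E"
    and Phi: "young_fun \<Phi>"
    and C12: "C1 \<ge> 0" "C2 \<ge> 0"
    and orlicz_ineq: "\<And>g. g \<in> D \<Longrightarrow> (\<integral>x. (g x)\<^sup>2 \<partial>\<mu>) = 1 \<Longrightarrow>
           orlicz_norm \<mu> \<Phi> (\<lambda>x. (g x)\<^sup>2) \<le> ereal (C1 * E g g + C2 * (\<integral>x. (g x)\<^sup>2 \<partial>\<mu>))"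
    and poincare: "\<And>g. g \<in> D \<Longrightarrow>
           (\<integral>x. (g x)\<^sup>2 \<partial>\<mu>) - (\<integral>x. g x \<partial>\<mu>)\<^sup>2 \<le> C_P * E g g"
    and p: "p \<ge> 1"
    and moment: "(\<lambda>x. dist x x0 powr p) \<in> orlicz_space \<mu> (young_conj \<Phi>)"
  shows "\<exists>C1' C2' \<kappa>. C1' > 0 \<and> C2' > 0 \<and> \<kappa> > 0 \<and>
     (\<forall>\<nu>\<in>prob_measures. fisher_info D E \<mu> \<nu> \<noteq> \<infinity> \<longrightarrow>
        (let I = enn2real (fisher_info D E \<mu> \<nu>) in
           wasserstein_pow p \<nu> \<mu> \<le> ennreal (sqrt (C1' * I\<^sup>2 + C2' * I))
         \<and> wasserstein_pow 1 \<nu> \<mu> \<noteq> \<infinity>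
         \<and> \<kappa> * ((1 + (enn2real (wasserstein_pow 1 \<nu> \<mu>))\<^sup>2) powr (p / 2) - 1) \<le> I
         \<and> (p \<ge> 2 \<longrightarrow> wasserstein_pow 2 \<nu> \<mu> \<noteq> \<infinity>
              \<and> \<kappa> * ((1 + (enn2real (wasserstein_pow 2 \<nu> \<mu>))\<^sup>2) powr (p / 4) - 1) \<le> I)))"
proof -
  interpret prob_space \<mu> by (fact mu(1))
  have spmu: "space \<mu> = UNIV" using mu(2) sets_eq_imp_space_eq by fastforce
  obtain c0 where c0: "c0 > 0" and Mc0: "(\<integral>\<^sup>+x. young_conj \<Phi> (\<bar>dist x x0 powr p\<bar> / c0) \<partial>\<mu>) \<le> 1"
    using gauge_fin[of \<mu> "young_conj \<Phi>" "\<lambda>x. dist x x0 powr p"] moment unfolding orlicz_space_def by auto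
  define K0 where "K0 = Kc c0 C1 C2 (max C_P 0)"
  have K01: "K0 \<ge> 1" unfolding K0_def Kc_def using c0 C12
    by (simp add: add_nonneg_nonneg mult_nonneg_nonneg)
  define K where "K = 2 powr p * K0"
  have Kp: "K > 0" unfolding K_def using K01 by simp
  define \<kappa> where "\<kappa> = min (kap p 1 K) (kap p 2 K)"
  have kp: "\<kappa> > 0" unfolding \<kappa>_def using kap_pos[of p 1 K] kap_pos[of p 2 K] p Kp by simp
  have main: "let I = enn2real (fisher_info D E \<mu> \<nu>) in
           wasserstein_pow p \<nu> \<mu> \<le> ennreal (sqrt (K\<^sup>2 * I\<^sup>2 + K\<^sup>2 * I))
         \<and> wasserstein_pow 1 \<nu> \<mu> \<noteq> \<infinity>
         \<and> \<kappa> * ((1 + (enn2real (wasserstein_pow 1 \<nu> \<mu>))\<^sup>2) powr (p / 2) - 1) \<le> I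
         \<and> (p \<ge> 2 \<longrightarrow> wasserstein_pow 2 \<nu> \<mu> \<noteq> \<infinity>
              \<and> \<kappa> * ((1 + (enn2real (wasserstein_pow 2 \<nu> \<mu>))\<^sup>2) powr (p / 4) - 1) \<le> I)"
    if nu: "\<nu> \<in> prob_measures" and fin: "fisher_info D E \<mu> \<nu> \<noteq> \<infinity>" for \<nu>
  proof -
    let ?P = "\<lambda>f. f \<in> borel_measurable \<mu> \<and> (\<forall>x. f x \<ge> 0) \<and> \<nu> = density \<mu> (\<lambda>x. ennreal (f x))
             \<and> (\<lambda>x. sqrt (f x)) \<in> D"
    have ex: "\<exists>f. ?P f"
    proof (rule ccontr)
      assume "\<not> (\<exists>f. ?P f)"
      then have "fisher_info D E \<mu> \<nu> = \<infinity>" unfolding fisher_info_def by auto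
      then show False using fin by simp
    qed
    define f where "f = (SOME f. ?P f)"
    have Pf: "?P f" unfolding f_def by (rule someI_ex[OF ex])
    have fm: "f \<in> borel_measurable \<mu>" and fpos: "\<And>x. f x \<ge> 0"
      and nud: "\<nu> = density \<mu> (\<lambda>x. ennreal (f x))" and gD: "(\<lambda>x. sqrt (f x)) \<in> D"
      using Pf by auto
    define I where "I = E (\<lambda>x. sqrt (f x)) (\<lambda>x. sqrt (f x))"
    have I0: "I \<ge> 0" unfolding I_def by (rule df_pos[OF DF gD])
    have fish: "fisher_info D E \<mu> \<nu> = ennreal I"
      unfolding fisher_info_def I_def f_def using ex by (simp add: Let_def)
    have Ieq: "enn2real (fisher_info D E \<mu> \<nu>) = I" using fish I0 by simp
    have f1: "(\<integral>\<^sup>+x. ennreal (f x) \<partial>\<mu>) = 1"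
    proof -
      have ps: "prob_space \<nu>" using nu unfolding prob_measures_def by auto
      have "emeasure \<nu> (space \<nu>) = 1" using ps by (simp add: prob_space.emeasure_space_1)
      moreover have "space \<nu> = space \<mu>" unfolding nud by simp
      moreover have "emeasure \<nu> (space \<mu>) = (\<integral>\<^sup>+x. ennreal (f x) \<partial>\<mu>)"
      proof -
        have "emeasure \<nu> (space \<mu>) = (\<integral>\<^sup>+x. ennreal (f x) * indicator (space \<mu>) x \<partial>\<mu>)"
          unfolding nud by (rule emeasure_density) (use fm in auto)
        also have "\<dots> = (\<integral>\<^sup>+x. ennreal (f x) \<partial>\<mu>)" by (rule nn_integral_cong) simp
        finally show ?thesis .
      qed
      ultimately show ?thesis by simp
    qed
    define s where "s = sqrt (I * (1 + I))"
    have s0: "s \<ge> 0" unfolding s_def using I0 by simp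
    have Tb: "(\<integral>\<^sup>+x. ennreal ((1 + dist x x0 powr p) * \<bar>f x - 1\<bar>) \<partial>\<mu>) \<le> ennreal (K0 * s)"
      unfolding K0_def s_def I_def
      by (rule per_nu[OF mu DF cons C12 orlicz_ineq poincare c0 Mc0 fm fpos gD f1])
    from coupling_construct[OF mu fm fpos f1]
    obtain \<pi> where H: "\<pi> \<in> couplings (density \<mu> (\<lambda>x. ennreal (f x))) \<mu> \<and> prob_space \<pi> \<and>
      (\<forall>c W. c \<in> borel_measurable borel \<longrightarrow> W \<in> borel_measurable borel \<longrightarrow>
        (\<forall>x. c (x, x) = 0) \<longrightarrow> (\<forall>x y. c (x, y) \<le> W x + W y) \<longrightarrow>
        (\<integral>\<^sup>+z. c z \<partial>\<pi>) \<le> (\<integral>\<^sup>+x. W x * ennreal \<bar>f x - 1\<bar> \<partial>\<mu>))" ..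
    have cpl: "\<pi> \<in> couplings (density \<mu> (\<lambda>x. ennreal (f x))) \<mu>" using H by (rule conjunct1)
    have pspi: "prob_space \<pi>" using H[THEN conjunct2] by (rule conjunct1)
    have cost: "\<forall>c W. c \<in> borel_measurable borel \<longrightarrow> W \<in> borel_measurable borel \<longrightarrow>
        (\<forall>x. c (x, x) = 0) \<longrightarrow> (\<forall>x y. c (x, y) \<le> W x + W y) \<longrightarrow>
        (\<integral>\<^sup>+z. c z \<partial>\<pi>) \<le> (\<integral>\<^sup>+x. W x * ennreal \<bar>f x - 1\<bar> \<partial>\<mu>)"
      using H[THEN conjunct2] by (rule conjunct2)
    have cpl': "\<pi> \<in> couplings \<nu> \<mu>" using cpl nud by simp
    have spi: "sets \<pi> = sets (borel :: ('a \<times> 'a) measure)" using cpl unfolding couplings_def by simp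
    define X where "X q = (\<integral>\<^sup>+z. ennreal (dist (fst z) (snd z) powr q) \<partial>\<pi>)" for q
    have Xb: "X q \<le> ennreal (K * s)" if "1 \<le> q" "q \<le> p" for q
      using Xq_bound[OF mu fm cost Tb _ that] K01 s0 unfolding X_def K_def by (simp add: mult.assoc)
    have WX: "wasserstein_pow q \<nu> \<mu> \<le> X q" for q
      unfolding wasserstein_pow_def X_def by (rule INF_lower[OF cpl'])
    have Dm: "(\<lambda>z. dist (fst z) (snd z)) \<in> borel_measurable \<pi>"
    proof -
      have "(\<lambda>z::'a\<times>'a. dist (fst z) (snd z)) \<in> borel_measurable borel" by measurable
      then show ?thesis using spi measurable_cong_sets by blast
    qed
    have Xfin: "X q \<noteq> \<top>" if "1 \<le> q" "q \<le> p" for q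
      using Xb[OF that] neq_top_trans[OF ennreal_neq_top] by blast
    define Y where "Y q = enn2real (X q)" for q
    have XY: "X q = ennreal (Y q)" if "1 \<le> q" "q \<le> p" for q
      unfolding Y_def using Xfin[OF that] by (simp add: ennreal_enn2real_if)
    have Y0: "Y q \<ge> 0" for q unfolding Y_def by simp
    have YK: "Y q \<le> K * s" if "1 \<le> q" "q \<le> p" for q
      using Xb[OF that] XY[OF that] Kp s0 by (simp add: ennreal_le_iff mult_nonneg_nonneg)
    have Yj: "Y q \<le> (1 + Y p) powr (q / p)" if "1 \<le> q" "q \<le> p" for q
    proof -
      have "X q \<le> ennreal ((1 + Y p) powr (q / p))"
        unfolding X_def
        by (rule jensen_pow[OF pspi Dm _ _ _ _ Y0[of p]]) (use that XY[of p] p in \<open>auto simp: X_def\<close>)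
      then show ?thesis using XY[OF that] by (simp add: ennreal_le_iff)
    qed
    have WY: "enn2real (wasserstein_pow q \<nu> \<mu>) \<le> Y q" "wasserstein_pow q \<nu> \<mu> \<noteq> \<infinity>"
      if "1 \<le> q" "q \<le> p" for q
    proof -
      show "enn2real (wasserstein_pow q \<nu> \<mu>) \<le> Y q"
        unfolding Y_def using WX[of q] Xfin[OF that] by (intro enn2real_mono) (auto simp: top.not_eq_extremum)
      show "wasserstein_pow q \<nu> \<mu> \<noteq> \<infinity>"
        using WX[of q] Xfin[OF that] neq_top_trans by force
    qed
    have fin_q: "\<kappa> * ((1 + (enn2real (wasserstein_pow q \<nu> \<mu>))\<^sup>2) powr (p / (2 * q)) - 1) \<le> I"
      if q: "1 \<le> q" "q \<le> p" and kq: "\<kappa> \<le> kap p q K" for q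
    proof -
      let ?w = "enn2real (wasserstein_pow q \<nu> \<mu>)"
      have w0: "?w \<ge> 0" by simp
      have wY: "?w \<le> Y q" by (rule WY(1)[OF q])
      have "(1 + ?w\<^sup>2) powr (p / (2 * q)) \<le> (1 + (Y q)\<^sup>2) powr (p / (2 * q))"
        using wY w0 q p by (intro powr_mono2) (auto intro!: power_mono)
      moreover have br: "(1 + ?w\<^sup>2) powr (p / (2 * q)) - 1 \<ge> 0" using q p by (simp add: ge_one_powr_ge_zero)
      ultimately have "\<kappa> * ((1 + ?w\<^sup>2) powr (p / (2 * q)) - 1) \<le> kap p q K * ((1 + (Y q)\<^sup>2) powr (p / (2 * q)) - 1)"
        using kq kp by (intro mult_mono) auto
      also have "\<dots> \<le> I"
        by (rule final_q[OF p _ Kp I0 Y0 Y0]) (use q YK[OF q] YK[of p] p Yj[OF q] in \<open>auto simp: s_def\<close>)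
      finally show ?thesis .
    qed
    have c1: "wasserstein_pow p \<nu> \<mu> \<le> ennreal (sqrt (K\<^sup>2 * I\<^sup>2 + K\<^sup>2 * I))"
    proof -
      have "K\<^sup>2 * I\<^sup>2 + K\<^sup>2 * I = K\<^sup>2 * (I * (1 + I))" by (simp add: algebra_simps power2_eq_square)
      then have "sqrt (K\<^sup>2 * I\<^sup>2 + K\<^sup>2 * I) = sqrt (K\<^sup>2) * s" unfolding s_def by (simp only: real_sqrt_mult)
      also have "sqrt (K\<^sup>2) = K" using Kp by (simp only: real_sqrt_abs abs_of_pos)
      finally have "K * s = sqrt (K\<^sup>2 * I\<^sup>2 + K\<^sup>2 * I)" by simp
      then show ?thesis using WX[of p] Xb[of p] p by (metis order.trans order.refl)
    qed
    have c3: "\<kappa> * ((1 + (enn2real (wasserstein_pow 1 \<nu> \<mu>))\<^sup>2) powr (p / 2) - 1) \<le> I"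
      using fin_q[of 1] p unfolding \<kappa>_def by simp
    have c4: "p \<ge> 2 \<longrightarrow> wasserstein_pow 2 \<nu> \<mu> \<noteq> \<infinity>
              \<and> \<kappa> * ((1 + (enn2real (wasserstein_pow 2 \<nu> \<mu>))\<^sup>2) powr (p / 4) - 1) \<le> I"
    proof
      assume p2: "p \<ge> 2"
      show "wasserstein_pow 2 \<nu> \<mu> \<noteq> \<infinity>
              \<and> \<kappa> * ((1 + (enn2real (wasserstein_pow 2 \<nu> \<mu>))\<^sup>2) powr (p / 4) - 1) \<le> I"
        using WY(2)[of 2] fin_q[of 2] p2 unfolding \<kappa>_def by simp
    qed
    show ?thesis unfolding Let_def Ieq using c1 WY(2)[of 1] p c3 c4 by simp
  qed
  show ?thesis
    by (rule exI[of _ "K\<^sup>2"], rule exI[of _ "K\<^sup>2"], rule exI[of _ \<kappa>]) (use Kp kp main in auto)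
qed

end
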